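(* Let $G$ be a subgroup of the affine group $\mathcal G$ with a unitary representation $G\ni g\mapsto U_g$ on a separable Hilbert space, and let $\dot A$ be a $G$-invariant closed densely defined symmetric operator with deficiency indices $(1,1)$. Suppose that $\dot A$ has either (i) at least three different self-adjoint $G$-invariant extensions, or (ii) at least two $G$-invariant maximal dissipative extensions, one of which is not self-adjoint. Then every maximal dissipative extension $A$ of $\dot A$ with $\dot A\subset A\subset(\dot A)^*$ is $G$-invariant. Moreover, in this case, if the group $G$ is nontrivial, then $\dot A$ is not semi-bounded.
   Context: $\mathcal G$ is the group (under composition) of affine maps $g(x)=ax+b$ of $\mathbb R$ with $a>0$, $b\in\mathbb R$; for an operator $A$, $g(A)=aA+bI$. A densely defined closed operator $A$ is $G$-invariant (with respect to $g\mapsto U_g$) if $U_g(\mathrm{Dom}(A))=\mathrm{Dom}(A)$ and $U_gAU_g^*f=aAf+bf$ for all $f\in\mathrm{Dom}(A)$ and all $g\in G$. An operator is maximal dissipative if $\operatorname{Im}(Af,f)\ge0$ on its domain and it has no proper dissipative extension. Extensions of $\dot A$ are understood as operators $A$ with $\dot A\subset A\subset(\dot A)^*$. *)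

theory Defs
  imports "HOL-Analysis.Analysis"
begin

class complex_inner = real_normed_vector +
  fixes scaleC :: "complex \<Rightarrow> 'a \<Rightarrow> 'a" (infixr \<open>*\<^sub>C\<close> 75)
    and cinner :: "'a \<Rightarrow> 'a \<Rightarrow> complex"
  assumes scaleC_add_right: "c *\<^sub>C (x + y) = c *\<^sub>C x + c *\<^sub>C y"
    and scaleC_add_left: "(c + d) *\<^sub>C x = c *\<^sub>C x + d *\<^sub>C x"
    and scaleC_scaleC: "c *\<^sub>C (d *\<^sub>C x) = (c * d) *\<^sub>C x"
    and scaleC_one: "1 *\<^sub>C x = x"
    and scaleR_scaleC: "scaleR r x = complex_of_real r *\<^sub>C x"
    and cinner_commute: "cinner x y = cnj (cinner y x)"
    and cinner_add_left: "cinner (x + y) z = cinner x z + cinner y z"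
    and cinner_scaleC_left: "cinner (c *\<^sub>C x) y = c * cinner x y"
    and cinner_self_eq_zero: "cinner x x = 0 \<longleftrightarrow> x = 0"
    and norm_eq_sqrt_cinner: "norm x = sqrt (Re (cinner x x))"

class chilbert_space = complex_inner + complete_space

definition separable_space :: "'h::chilbert_space itself \<Rightarrow> bool" where
  "separable_space _ \<longleftrightarrow> (\<exists>D::'h set. countable D \<and> closure D = UNIV)"

text \<open>A (possibly unbounded) linear operator in 'h is represented by its graph,
a complex linear subspace of 'h \<times> 'h which is the graph of a function.
Extension of operators is inclusion of graphs.\<close>

type_synonym 'h operator = "('h \<times> 'h) set"

definition csubspace :: "'a::complex_inner set \<Rightarrow> bool" where
  "csubspace S \<longleftrightarrow> 0 \<in> S \<and> (\<forall>x\<in>S. \<forall>y\<in>S. x + y \<in> S) \<and> (\<forall>c x. x \<in> S \<longrightarrow> c *\<^sub>C x \<in> S)"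

definition is_operator :: "'h::chilbert_space operator \<Rightarrow> bool" where
  "is_operator A \<longleftrightarrow>
     0 \<in> A
   \<and> (\<forall>p\<in>A. \<forall>q\<in>A. (fst p + fst q, snd p + snd q) \<in> A)
   \<and> (\<forall>c p. p \<in> A \<longrightarrow> (c *\<^sub>C fst p, c *\<^sub>C snd p) \<in> A)
   \<and> (\<forall>y. (0, y) \<in> A \<longrightarrow> y = 0)"

definition op_dom :: "'h operator \<Rightarrow> 'h set" where
  "op_dom A = fst ` A"

definition op_app :: "'h operator \<Rightarrow> 'h \<Rightarrow> 'h" where
  "op_app A f = (THE y. (f, y) \<in> A)"

definition densely_defined :: "'h::chilbert_space operator \<Rightarrow> bool" where
  "densely_defined A \<longleftrightarrow> closure (op_dom A) = UNIV"

definition closed_operator :: "'h::chilbert_space operator \<Rightarrow> bool" where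
  "closed_operator A \<longleftrightarrow> is_operator A \<and> closed A"

definition adjoint :: "'h::chilbert_space operator \<Rightarrow> 'h operator" where
  "adjoint A = {(g, h). \<forall>(f, k)\<in>A. cinner k g = cinner f h}"

definition symmetric_operator :: "'h::chilbert_space operator \<Rightarrow> bool" where
  "symmetric_operator A \<longleftrightarrow> is_operator A \<and> densely_defined A \<and>
     (\<forall>f\<in>op_dom A. \<forall>g\<in>op_dom A. cinner (op_app A f) g = cinner f (op_app A g))"

definition self_adjoint :: "'h::chilbert_space operator \<Rightarrow> bool" where
  "self_adjoint A \<longleftrightarrow> is_operator A \<and> densely_defined A \<and> A = adjoint A"

definition deficiency_space :: "'h::chilbert_space operator \<Rightarrow> complex \<Rightarrow> 'h set" where
  "deficiency_space A z = {g. (g, z *\<^sub>C g) \<in> adjoint A}"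

definition cdim_one :: "'h::chilbert_space set \<Rightarrow> bool" where
  "cdim_one S \<longleftrightarrow> (\<exists>v. v \<noteq> 0 \<and> S = {c *\<^sub>C v | c. True})"

definition deficiency_indices_1_1 :: "'h::chilbert_space operator \<Rightarrow> bool" where
  "deficiency_indices_1_1 A \<longleftrightarrow>
     cdim_one (deficiency_space A \<i>) \<and> cdim_one (deficiency_space A (- \<i>))"

definition dissipative :: "'h::chilbert_space operator \<Rightarrow> bool" where
  "dissipative A \<longleftrightarrow> is_operator A \<and> (\<forall>f\<in>op_dom A. Im (cinner (op_app A f) f) \<ge> 0)"

definition maximal_dissipative :: "'h::chilbert_space operator \<Rightarrow> bool" where
  "maximal_dissipative A \<longleftrightarrow> dissipative A \<and>
     (\<forall>B. dissipative B \<and> A \<subseteq> B \<longrightarrow> B = A)"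

definition semibounded :: "'h::chilbert_space operator \<Rightarrow> bool" where
  "semibounded A \<longleftrightarrow> (\<exists>c::real.
      (\<forall>f\<in>op_dom A. c * (norm f)\<^sup>2 \<le> Re (cinner (op_app A f) f))
    \<or> (\<forall>f\<in>op_dom A. Re (cinner (op_app A f) f) \<le> c * (norm f)\<^sup>2))"

text \<open>The affine map x \<mapsto> a x + b (a > 0) is encoded as the pair (a, b).\<close>
type_synonym affine = "real \<times> real"

definition aff_comp :: "affine \<Rightarrow> affine \<Rightarrow> affine" where
  "aff_comp g h = (fst g * fst h, fst g * snd h + snd g)"   (* (g \<circ> h)(x) = g (h x) *)

definition aff_id :: affine where "aff_id = (1, 0)"

definition aff_inv :: "affine \<Rightarrow> affine" where
  "aff_inv g = (1 / fst g, - snd g / fst g)"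

definition affine_subgroup :: "affine set \<Rightarrow> bool" where
  "affine_subgroup G \<longleftrightarrow> (\<forall>g\<in>G. fst g > 0) \<and> aff_id \<in> G \<and>
     (\<forall>g\<in>G. \<forall>h\<in>G. aff_comp g h \<in> G) \<and> (\<forall>g\<in>G. aff_inv g \<in> G)"

definition unitary :: "('h::chilbert_space \<Rightarrow> 'h) \<Rightarrow> bool" where
  "unitary U \<longleftrightarrow> bij U \<and> (\<forall>x y. U (x + y) = U x + U y) \<and> (\<forall>c x. U (c *\<^sub>C x) = c *\<^sub>C U x)
     \<and> (\<forall>x y. cinner (U x) (U y) = cinner x y)"

definition unitary_rep :: "affine set \<Rightarrow> (affine \<Rightarrow> 'h::chilbert_space \<Rightarrow> 'h) \<Rightarrow> bool" where
  "unitary_rep G U \<longleftrightarrow> (\<forall>g\<in>G. unitary (U g)) \<and>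
     (\<forall>g\<in>G. \<forall>h\<in>G. U (aff_comp g h) = U g \<circ> U h)"

definition G_invariant :: "affine set \<Rightarrow> (affine \<Rightarrow> 'h::chilbert_space \<Rightarrow> 'h) \<Rightarrow> 'h operator \<Rightarrow> bool" where
  "G_invariant G U A \<longleftrightarrow> densely_defined A \<and> closed_operator A \<and>
     (\<forall>g\<in>G. U g ` op_dom A = op_dom A \<and>
        (\<forall>f\<in>op_dom A. U g (op_app A (inv (U g) f))
                        = complex_of_real (fst g) *\<^sub>C op_app A f + complex_of_real (snd g) *\<^sub>C f))"

end

theory Submission
  imports Defs "HOL-Analysis.Analysis"
begin



section \<open>Basic algebra in complex inner product spaces\<close>


lemma scaleC_zero_left [simp]: "0 *\<^sub>C x = 0"
  using scaleR_scaleC[of 0 x] by simp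

lemma scaleC_zero_right [simp]: "c *\<^sub>C 0 = 0"
proof -
  have "c *\<^sub>C 0 = c *\<^sub>C 0 + c *\<^sub>C 0" using scaleC_add_right[of c 0 0] by simp
  then show ?thesis by simp
qed

lemma scaleC_minus_one [simp]: "(-1) *\<^sub>C x = - x"
  using scaleR_scaleC[of "-1" x] by simp

lemma scaleC_minus_left: "(- c) *\<^sub>C x = - (c *\<^sub>C x)"
proof -
  have "(- c) *\<^sub>C x + c *\<^sub>C x = 0" using scaleC_add_left[of "-c" c x] by simp
  then show ?thesis by (simp add: eq_neg_iff_add_eq_0)
qed

lemma scaleC_minus_right: "c *\<^sub>C (- x) = - (c *\<^sub>C x)"
proof -
  have "c *\<^sub>C (- x) = c *\<^sub>C ((-1) *\<^sub>C x)" by simp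
  also have "\<dots> = (- c) *\<^sub>C x" using scaleC_scaleC[of c "-1" x] by simp
  finally show ?thesis by (simp add: scaleC_minus_left)
qed

lemma scaleC_diff_right: "c *\<^sub>C (x - y) = c *\<^sub>C x - c *\<^sub>C y"
  using scaleC_add_right[of c x "-y"] by (simp add: scaleC_minus_right)

lemma scaleC_diff_left: "(c - d) *\<^sub>C x = c *\<^sub>C x - d *\<^sub>C x"
  using scaleC_add_left[of c "-d" x] by (simp add: scaleC_minus_left)

lemma scaleC_of_real: "complex_of_real r *\<^sub>C x = scaleR r x"
  by (simp add: scaleR_scaleC)

lemma scaleC_eq_0_iff: "c *\<^sub>C x = 0 \<longleftrightarrow> c = 0 \<or> x = 0"
proof
  assume h: "c *\<^sub>C x = 0"
  show "c = 0 \<or> x = 0"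
  proof (cases "c = 0")
    case False
    then have "x = (inverse c * c) *\<^sub>C x" by (simp add: scaleC_one)
    also have "\<dots> = inverse c *\<^sub>C (c *\<^sub>C x)" by (simp add: scaleC_scaleC)
    also have "\<dots> = 0" using h by simp
    finally show ?thesis by simp
  qed simp
qed auto

lemma cinner_add_right: "cinner x (y + z) = cinner x y + cinner x z"
  by (metis cinner_add_left cinner_commute complex_cnj_add)

lemma cinner_scaleC_right: "cinner x (c *\<^sub>C y) = cnj c * cinner x y"
  by (metis cinner_commute cinner_scaleC_left complex_cnj_mult complex_cnj_cnj)

lemma cinner_zero_left [simp]: "cinner 0 x = 0"
  using cinner_scaleC_left[of 0 0 x] by simp

lemma cinner_zero_right [simp]: "cinner x 0 = 0"
  using cinner_scaleC_right[of x 0 0] by simp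

lemma cinner_minus_left: "cinner (- x) y = - cinner x y"
  using cinner_scaleC_left[of "-1" x y] by simp

lemma cinner_minus_right: "cinner x (- y) = - cinner x y"
  using cinner_scaleC_right[of x "-1" y] by simp

lemma cinner_diff_left: "cinner (x - y) z = cinner x z - cinner y z"
  using cinner_add_left[of x "-y" z] by (simp add: cinner_minus_left)

lemma cinner_diff_right: "cinner x (y - z) = cinner x y - cinner x z"
  using cinner_add_right[of x y "-z"] by (simp add: cinner_minus_right)

lemma cinner_scaleR_left: "cinner (scaleR r x) y = complex_of_real r * cinner x y"
  by (simp add: scaleR_scaleC cinner_scaleC_left)

lemma cinner_scaleR_right: "cinner x (scaleR r y) = complex_of_real r * cinner x y"
  by (simp add: scaleR_scaleC cinner_scaleC_right)

lemma Im_cinner_self [simp]: "Im (cinner x x) = 0"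
proof -
  have "Im (cinner x x) = - Im (cinner x x)" using arg_cong[OF cinner_commute[of x x], of Im] by simp
  then show ?thesis by linarith
qed

lemma Re_cinner_self_ge0: "Re (cinner x x) \<ge> 0"
proof (rule ccontr)
  assume "\<not> ?thesis"
  then have "sqrt (Re (cinner x x)) < 0" by simp
  then show False using norm_eq_sqrt_cinner[of x] norm_ge_zero[of x] by linarith
qed

lemma norm_sq_cinner: "(norm x)\<^sup>2 = Re (cinner x x)"
  using norm_eq_sqrt_cinner[of x] Re_cinner_self_ge0[of x] by simp

lemma cinner_self: "cinner x x = complex_of_real ((norm x)\<^sup>2)"
  by (simp add: norm_sq_cinner complex_eq_iff)

lemma norm_add_sq: "(norm (x + y))\<^sup>2 = (norm x)\<^sup>2 + (norm y)\<^sup>2 + 2 * Re (cinner x y)"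
proof -
  have "cinner (x + y) (x + y) = cinner x x + cinner y y + (cinner x y + cnj (cinner x y))"
    by (simp add: cinner_add_left cinner_add_right cinner_commute[of y x] algebra_simps)
  then show ?thesis by (simp add: norm_sq_cinner)
qed

lemma norm_diff_sq: "(norm (x - y))\<^sup>2 = (norm x)\<^sup>2 + (norm y)\<^sup>2 - 2 * Re (cinner x y)"
  using norm_add_sq[of x "-y"] by (simp add: cinner_minus_right)

lemma cauchy_schwarz: "cmod (cinner x y) \<le> norm x * norm y"
proof (cases "y = 0")
  case True then show ?thesis by simp
next
  case False
  define t where "t = cinner x y / complex_of_real ((norm y)\<^sup>2)"
  have ny: "norm y > 0" using False by simp
  have cc: "cinner x y * cnj (cinner x y) = complex_of_real ((cmod (cinner x y))\<^sup>2)"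
    by (rule complex_norm_square[symmetric])
  have cc2: "complex_of_real (cmod (cinner x y)) * complex_of_real (cmod (cinner x y)) = cinner x y * cnj (cinner x y)"
    using cc by (simp add: power2_eq_square)
  have e1: "cinner (x - t *\<^sub>C y) (x - t *\<^sub>C y)
      = cinner x x - cnj t * cinner x y - t * cinner y x + t * cnj t * cinner y y"
    by (simp add: cinner_diff_left cinner_diff_right cinner_scaleC_left cinner_scaleC_right algebra_simps)
  have e2: "cinner x x - cnj t * cinner x y - t * cinner y x + t * cnj t * cinner y y = cinner x x - complex_of_real ((cmod (cinner x y))\<^sup>2 / (norm y)\<^sup>2)"
    using ny unfolding t_def
    by (simp add: cinner_self cinner_commute[of y x] field_simps power2_eq_square cc2)
  have "0 \<le> Re (cinner (x - t *\<^sub>C y) (x - t *\<^sub>C y))" by (rule Re_cinner_self_ge0)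
  also have "\<dots> = Re (cinner x x - complex_of_real ((cmod (cinner x y))\<^sup>2 / (norm y)\<^sup>2))"
    using e1 e2 by simp
  finally have "(cmod (cinner x y))\<^sup>2 / (norm y)\<^sup>2 \<le> (norm x)\<^sup>2"
    by (simp add: cinner_self)
  then have "(cmod (cinner x y))\<^sup>2 \<le> (norm x)\<^sup>2 * (norm y)\<^sup>2"
    using ny by (simp add: field_simps)
  then have "(cmod (cinner x y))\<^sup>2 \<le> (norm x * norm y)\<^sup>2" by (simp add: power_mult_distrib)
  then show ?thesis by (rule power2_le_imp_le) simp
qed

lemma bounded_linear_cinner_right: "bounded_linear (\<lambda>y. cinner x y)"
proof (rule bounded_linear_intro[where K = "norm x"])
  show "cinner x (y + z) = cinner x y + cinner x z" for y z by (rule cinner_add_right)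
  show "cinner x (scaleR r y) = scaleR r (cinner x y)" for r y
    by (simp add: cinner_scaleR_right scaleR_conv_of_real)
  show "norm (cinner x y) \<le> norm y * norm x" for y
    using cauchy_schwarz[of x y] by (simp add: mult.commute)
qed

lemma bounded_linear_cinner_left: "bounded_linear (\<lambda>x. cinner x y)"
proof (rule bounded_linear_intro[where K = "norm y"])
  show "cinner (x + z) y = cinner x y + cinner z y" for x z by (rule cinner_add_left)
  show "cinner (scaleR r x) y = scaleR r (cinner x y)" for r x
    by (simp add: cinner_scaleR_left scaleR_conv_of_real)
  show "norm (cinner x y) \<le> norm x * norm y" for x
    using cauchy_schwarz[of x y] by simp
qed






lemma csubspace_scaleR: "csubspace M \<Longrightarrow> x \<in> M \<Longrightarrow> scaleR r x \<in> M"
  unfolding csubspace_def by (metis scaleR_scaleC)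

lemma csubspace_diff: "csubspace M \<Longrightarrow> x \<in> M \<Longrightarrow> y \<in> M \<Longrightarrow> x - y \<in> M"
  unfolding csubspace_def by (metis diff_conv_add_uminus scaleC_minus_one)

lemma orth_from_min:
  fixes z u :: "'a::chilbert_space"
  assumes "\<And>t. (norm z)\<^sup>2 \<le> (norm (z - t *\<^sub>C u))\<^sup>2"
  shows "cinner z u = 0"
proof -
  define c where "c = cinner z u"
  define r where "r = 1 / ((norm u)\<^sup>2 + 1)"
  have pos: "(norm u)\<^sup>2 + 1 > 0" by (metis add_nonneg_pos zero_le_power2 zero_less_one)
  then have r0: "r > 0" unfolding r_def by simp
  have r1: "r * (norm u)\<^sup>2 < 1" unfolding r_def using pos by (simp add: divide_less_eq)
  define t where "t = complex_of_real r * c"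
  have cc: "c * cnj c = complex_of_real ((cmod c)\<^sup>2)"
    by (rule complex_norm_square[symmetric])
  have cc3: "(complex_of_real (cmod c))\<^sup>2 = c * cnj c" using cc by simp
  have "cinner (z - t *\<^sub>C u) (z - t *\<^sub>C u)
      = cinner z z - cnj t * cinner z u - t * cinner u z + t * cnj t * cinner u u"
    by (simp add: cinner_diff_left cinner_diff_right cinner_scaleC_left cinner_scaleC_right algebra_simps)
  also have "\<dots> = complex_of_real ((norm z)\<^sup>2 - 2 * r * (cmod c)\<^sup>2 + r * r * (cmod c)\<^sup>2 * (norm u)\<^sup>2)"
  proof -
    have e1: "cnj t * cinner z u = complex_of_real (r * (cmod c)\<^sup>2)"
      unfolding t_def c_def[symmetric] using cc by (simp add: mult.commute mult.left_commute)
    have e2: "t * cinner u z = complex_of_real (r * (cmod c)\<^sup>2)"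
      unfolding t_def using cc by (simp add: cinner_commute[of u z] c_def[symmetric] mult.assoc)
    have e3: "t * cnj t * cinner u u = complex_of_real (r * r * (cmod c)\<^sup>2 * (norm u)\<^sup>2)"
      unfolding t_def using cc
      by (simp add: cinner_self mult.commute mult.left_commute)
    show ?thesis using e1 e2 e3 by (simp add: cinner_self)
  qed
  finally have "(norm (z - t *\<^sub>C u))\<^sup>2 = (norm z)\<^sup>2 - 2 * r * (cmod c)\<^sup>2 + r * r * (cmod c)\<^sup>2 * (norm u)\<^sup>2"
    by (simp add: norm_sq_cinner)
  with assms[of t] have "0 \<le> r * (cmod c)\<^sup>2 * (r * (norm u)\<^sup>2 - 2)"
    by (simp add: algebra_simps)
  moreover have "r * (norm u)\<^sup>2 - 2 < 0" using r1 by simp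
  ultimately have "r * (cmod c)\<^sup>2 \<le> 0"
  proof -
    assume h1: "0 \<le> r * (cmod c)\<^sup>2 * (r * (norm u)\<^sup>2 - 2)" and h2: "r * (norm u)\<^sup>2 - 2 < 0"
    show ?thesis
    proof (rule ccontr)
      assume "\<not> ?thesis"
      then have "r * (cmod c)\<^sup>2 > 0" by simp
      then have "r * (cmod c)\<^sup>2 * (r * (norm u)\<^sup>2 - 2) < 0" using h2 by (rule mult_pos_neg)
      then show False using h1 by linarith
    qed
  qed
  then have "(cmod c)\<^sup>2 \<le> 0" using r0 by (simp add: mult_le_0_iff)
  then show ?thesis unfolding c_def by simp
qed

lemma projection_thm:
  fixes M :: "'a::chilbert_space set" and y :: 'a
  assumes sub: "csubspace M" and cl: "closed M"
  shows "\<exists>m\<in>M. \<forall>u\<in>M. cinner (y - m) u = 0"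
proof -
  define S where "S = (\<lambda>m. (norm (y - m))\<^sup>2) ` M"
  define d where "d = Inf S"
  have M0: "0 \<in> M" using sub unfolding csubspace_def by simp
  have Sne: "S \<noteq> {}" using M0 unfolding S_def by auto
  have Sbdd: "bdd_below S" unfolding S_def by (rule bdd_belowI[of _ 0]) auto
  have low: "d \<le> (norm (y - x))\<^sup>2" if "x \<in> M" for x
    unfolding d_def S_def using Sbdd that by (auto intro!: cInf_lower simp: S_def)
  have "\<exists>m\<in>M. (norm (y - m))\<^sup>2 < d + inverse (real (Suc n))" for n
  proof -
    have "Inf S < d + inverse (real (Suc n))" unfolding d_def by simp
    then obtain s where "s \<in> S" "s < d + inverse (real (Suc n))"
      using cInf_less_iff[OF Sne Sbdd] by blast
    then show ?thesis unfolding S_def by auto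
  qed
  then obtain m where mM: "\<And>n. m n \<in> M"
    and mle: "\<And>n. (norm (y - m n))\<^sup>2 < d + inverse (real (Suc n))"
    by metis
  have par: "(norm (m n - m k))\<^sup>2 \<le> 2 * inverse (real (Suc n)) + 2 * inverse (real (Suc k))" for n k
  proof -
    define a where "a = y - m n"
    define b where "b = y - m k"
    define mid where "mid = scaleR (1/2) (m n + m k)"
    have midM: "mid \<in> M" unfolding mid_def
      using sub mM unfolding csubspace_def by (metis csubspace_scaleR sub)
    have ab: "a + b = scaleR 2 (y - mid)" unfolding a_def b_def mid_def
      by (simp add: algebra_simps scaleR_add_right scaleR_2)
    have "(norm (a + b))\<^sup>2 = 4 * (norm (y - mid))\<^sup>2" unfolding ab
      by (simp add: power_mult_distrib)
    then have "(norm (a + b))\<^sup>2 \<ge> 4 * d" using low[OF midM] by simp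
    moreover have "(norm (a + b))\<^sup>2 + (norm (a - b))\<^sup>2 = 2 * (norm a)\<^sup>2 + 2 * (norm b)\<^sup>2"
      using norm_add_sq[of a b] norm_diff_sq[of a b] by simp
    moreover have "a - b = m k - m n" unfolding a_def b_def by simp
    then have "(norm (a - b))\<^sup>2 = (norm (m n - m k))\<^sup>2" by (simp add: norm_minus_commute)
    moreover have "(norm a)\<^sup>2 < d + inverse (real (Suc n))" "(norm b)\<^sup>2 < d + inverse (real (Suc k))"
      using mle[of n] mle[of k] unfolding a_def b_def by auto
    ultimately show ?thesis by linarith
  qed
  have cau: "Cauchy m"
  proof (rule metric_CauchyI)
    fix e :: real assume e: "e > 0"
    obtain N :: nat where N: "4 / e\<^sup>2 < real N" using reals_Archimedean2 by blast
    have "4 < real N * e\<^sup>2" using N e by (simp add: field_simps)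
    moreover have "real N * e\<^sup>2 \<le> real (Suc N) * e\<^sup>2" by (simp add: mult_right_mono)
    ultimately have "4 < real (Suc N) * e\<^sup>2" by linarith
    then have h4: "4 < e\<^sup>2 * real (Suc N)" by (simp add: mult.commute)
    have pos: "(0::real) < real (Suc N)" by (simp del: of_nat_Suc)
    have "4 / real (Suc N) < e\<^sup>2" using pos_divide_less_eq[OF pos, of 4 "e\<^sup>2"] h4 by simp
    then have eN: "4 * inverse (real (Suc N)) < e\<^sup>2" by (simp add: divide_inverse)
    show "\<exists>M. \<forall>ma\<ge>M. \<forall>n\<ge>M. dist (m ma) (m n) < e"
    proof (intro exI allI impI)
      fix p q assume p: "N \<le> p" and q: "N \<le> q"
      have "inverse (real (Suc p)) \<le> inverse (real (Suc N))"
        using p by (simp add: le_imp_inverse_le)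
      moreover have "inverse (real (Suc q)) \<le> inverse (real (Suc N))"
        using q by (simp add: le_imp_inverse_le)
      ultimately have "(norm (m p - m q))\<^sup>2 < e\<^sup>2" using par[of p q] eN by linarith
      then have "norm (m p - m q) < e" using e by (simp add: power_less_imp_less_base)
      then show "dist (m p) (m q) < e" by (simp add: dist_norm)
    qed
  qed
  then obtain l where lim: "m \<longlonglongrightarrow> l" using Cauchy_convergent convergent_def by blast
  have lM: "l \<in> M" using closed_sequentially[OF cl] mM lim by blast
  have minl: "(norm (y - l))\<^sup>2 \<le> (norm (y - x))\<^sup>2" if xM: "x \<in> M" for x
  proof (rule LIMSEQ_le)
    show "(\<lambda>n. (norm (y - m n))\<^sup>2) \<longlonglongrightarrow> (norm (y - l))\<^sup>2"
      by (intro tendsto_intros lim)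
    show "(\<lambda>n. (norm (y - x))\<^sup>2 + inverse (real (Suc n))) \<longlonglongrightarrow> (norm (y - x))\<^sup>2"
      using tendsto_add[OF tendsto_const LIMSEQ_inverse_real_of_nat] by simp
    show "\<exists>N. \<forall>n\<ge>N. (norm (y - m n))\<^sup>2 \<le> (norm (y - x))\<^sup>2 + inverse (real (Suc n))"
    proof (intro exI allI impI)
      fix n :: nat
      show "(norm (y - m n))\<^sup>2 \<le> (norm (y - x))\<^sup>2 + inverse (real (Suc n))"
        using mle[of n] low[OF xM] by linarith
    qed
  qed
  have "\<forall>u\<in>M. cinner (y - l) u = 0"
  proof
    fix u assume uM: "u \<in> M"
    show "cinner (y - l) u = 0"
    proof (rule orth_from_min)
      fix t
      have "l + t *\<^sub>C u \<in> M" using sub lM uM unfolding csubspace_def by blast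
      from minl[OF this] show "(norm (y - l))\<^sup>2 \<le> (norm (y - l - t *\<^sub>C u))\<^sup>2"
        by (simp add: algebra_simps)
    qed
  qed
  with lM show ?thesis by blast
qed





definition psc :: "complex \<Rightarrow> 'h::chilbert_space \<times> 'h \<Rightarrow> 'h \<times> 'h" where
  "psc c p = (c *\<^sub>C fst p, c *\<^sub>C snd p)"

definition om :: "'h::chilbert_space \<times> 'h \<Rightarrow> 'h \<times> 'h \<Rightarrow> complex" where
  "om p q = cinner (snd p) (fst q) - cinner (fst p) (snd q)"

lemma psc_simps [simp]: "fst (psc c p) = c *\<^sub>C fst p" "snd (psc c p) = c *\<^sub>C snd p"
  by (simp_all add: psc_def)

lemma psc_add: "psc c (p + q) = psc c p + psc c q"
  by (simp add: psc_def scaleC_add_right prod_eq_iff)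

lemma psc_add_left: "psc (c + d) p = psc c p + psc d p"
  by (simp add: psc_def scaleC_add_left prod_eq_iff)

lemma psc_diff_left: "psc (c - d) p = psc c p - psc d p"
  by (simp add: psc_def scaleC_diff_left prod_eq_iff)

lemma psc_psc: "psc c (psc d p) = psc (c * d) p"
  by (simp add: psc_def scaleC_scaleC prod_eq_iff)

lemma psc_one [simp]: "psc 1 p = p"
  by (simp add: psc_def scaleC_one prod_eq_iff)

lemma psc_zero [simp]: "psc 0 p = 0" "psc c 0 = 0"
  by (simp_all add: psc_def prod_eq_iff)

lemma psc_minus_one: "psc (-1) p = - p"
  by (simp add: psc_def prod_eq_iff)

lemma op_zero: "is_operator A \<Longrightarrow> 0 \<in> A"
  unfolding is_operator_def by simp

lemma op_add: "is_operator A \<Longrightarrow> p \<in> A \<Longrightarrow> q \<in> A \<Longrightarrow> p + q \<in> A"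
  unfolding is_operator_def by (metis fst_add snd_add prod.collapse)

lemma op_psc: "is_operator A \<Longrightarrow> p \<in> A \<Longrightarrow> psc c p \<in> A"
  unfolding is_operator_def psc_def by blast

lemma op_uminus: "is_operator A \<Longrightarrow> p \<in> A \<Longrightarrow> - p \<in> A"
  using op_psc[of A p "-1"] by (simp add: psc_minus_one)

lemma op_diff: "is_operator A \<Longrightarrow> p \<in> A \<Longrightarrow> q \<in> A \<Longrightarrow> p - q \<in> A"
  using op_add[of A p "- q"] op_uminus[of A q] by simp

lemma op_unique: "is_operator A \<Longrightarrow> (f, k) \<in> A \<Longrightarrow> (f, k') \<in> A \<Longrightarrow> k = k'"
proof -
  assume A: "is_operator A" "(f, k) \<in> A" "(f, k') \<in> A"
  then have "(f, k) - (f, k') \<in> A" by (rule op_diff)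
  then have "(0, k - k') \<in> A" by simp
  with A(1) have "k - k' = 0" unfolding is_operator_def by blast
  then show ?thesis by simp
qed

lemma op_app_eq: "is_operator A \<Longrightarrow> (f, k) \<in> A \<Longrightarrow> op_app A f = k"
  unfolding op_app_def by (rule the_equality) (auto dest: op_unique)

lemma op_dom_iff: "f \<in> op_dom A \<longleftrightarrow> (\<exists>k. (f, k) \<in> A)"
  unfolding op_dom_def by force

lemma op_app_in: "is_operator A \<Longrightarrow> f \<in> op_dom A \<Longrightarrow> (f, op_app A f) \<in> A"
  using op_dom_iff op_app_eq by metis

lemma dissipative_iff: "is_operator A \<Longrightarrow> dissipative A \<longleftrightarrow> (\<forall>p\<in>A. Im (cinner (snd p) (fst p)) \<ge> 0)"
  unfolding dissipative_def
  by (metis op_app_eq op_app_in op_dom_iff prod.collapse fst_conv snd_conv)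

lemma adj_iff: "(g, h) \<in> adjoint A \<longleftrightarrow> (\<forall>p\<in>A. cinner (snd p) g = cinner (fst p) h)"
  unfolding adjoint_def by auto

lemma adj_iff': "q \<in> adjoint A \<longleftrightarrow> (\<forall>p\<in>A. cinner (snd p) (fst q) = cinner (fst p) (snd q))"
  using adj_iff[of "fst q" "snd q" A] by simp

lemma adj_add: "p \<in> adjoint A \<Longrightarrow> q \<in> adjoint A \<Longrightarrow> p + q \<in> adjoint A"
  unfolding adj_iff' by (simp add: cinner_add_right)

lemma adj_psc: "p \<in> adjoint A \<Longrightarrow> psc c p \<in> adjoint A"
  unfolding adj_iff' by (simp add: cinner_scaleC_right)

lemma adj_zero: "0 \<in> adjoint A"
  unfolding adj_iff' by simp

lemma adj_uminus: "p \<in> adjoint A \<Longrightarrow> - p \<in> adjoint A"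
  using adj_psc[of p A "-1"] by (simp add: psc_minus_one)

lemma adj_diff: "p \<in> adjoint A \<Longrightarrow> q \<in> adjoint A \<Longrightarrow> p - q \<in> adjoint A"
  using adj_add[of p A "- q"] adj_uminus[of q A] by simp

lemma adj_anti: "A \<subseteq> B \<Longrightarrow> adjoint B \<subseteq> adjoint A"
  unfolding adjoint_def by auto

lemma om_A_adj: "x \<in> A \<Longrightarrow> y \<in> adjoint A \<Longrightarrow> om x y = 0"
  unfolding om_def adj_iff' by auto

lemma om_swap: "om y x = - cnj (om x y)"
  unfolding om_def by (simp add: cinner_commute[of "snd y"] cinner_commute[of "fst y"])

lemma om_adj_A: "y \<in> adjoint A \<Longrightarrow> x \<in> A \<Longrightarrow> om y x = 0"
  using om_A_adj[of x A y] om_swap[of y x] by simp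

lemma om_add_left: "om (p + q) r = om p r + om q r"
  unfolding om_def by (simp add: cinner_add_left)

lemma om_add_right: "om p (q + r) = om p q + om p r"
  unfolding om_def by (simp add: cinner_add_right)

lemma om_diff_left: "om (p - q) r = om p r - om q r"
  unfolding om_def by (simp add: cinner_diff_left)

lemma om_diff_right: "om p (q - r) = om p q - om p r"
  unfolding om_def by (simp add: cinner_diff_right)

lemma om_psc_left: "om (psc c p) r = c * om p r"
  unfolding om_def by (simp add: cinner_scaleC_left algebra_simps)

lemma om_psc_right: "om p (psc c r) = cnj c * om p r"
  unfolding om_def by (simp add: cinner_scaleC_right algebra_simps)

lemma om_self: "om p p = \<i> * complex_of_real (2 * Im (cinner (snd p) (fst p)))"
  unfolding om_def
  by (simp add: cinner_commute[of "fst p" "snd p"] complex_eq_iff)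

lemma norm_scaleC: "norm (c *\<^sub>C x) = cmod c * norm x"
proof -
  have "cinner (c *\<^sub>C x) (c *\<^sub>C x) = (c * cnj c) * cinner x x"
    by (simp add: cinner_scaleC_left cinner_scaleC_right mult.assoc)
  also have "\<dots> = complex_of_real ((cmod c * norm x)\<^sup>2)"
    by (simp add: complex_norm_square[symmetric] cinner_self power_mult_distrib)
  finally have "(norm (c *\<^sub>C x))\<^sup>2 = (cmod c * norm x)\<^sup>2"
    using norm_sq_cinner[of "c *\<^sub>C x"] by simp
  then show ?thesis by (simp add: power2_eq_iff_nonneg)
qed

lemma bounded_linear_scaleC: "bounded_linear (\<lambda>x::'a::chilbert_space. c *\<^sub>C x)"
proof (rule bounded_linear_intro[where K = "cmod c"])
  show "c *\<^sub>C (x + y) = c *\<^sub>C x + c *\<^sub>C y" for x y :: 'a by (rule scaleC_add_right)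
  show "c *\<^sub>C scaleR r x = scaleR r (c *\<^sub>C x)" for r and x :: 'a
    by (simp add: scaleR_scaleC scaleC_scaleC mult.commute)
  show "norm (c *\<^sub>C x) \<le> norm x * cmod c" for x :: 'a by (simp add: norm_scaleC mult.commute)
qed


lemma range_closed:
  assumes cl: "closed_operator A" and e: "e > 0"
    and bnd: "\<And>p. p \<in> A \<Longrightarrow> e * norm (fst p) \<le> norm (snd p - z *\<^sub>C fst p)"
  shows "closed ((\<lambda>p. snd p - z *\<^sub>C fst p) ` A)"
proof -
  have opA: "is_operator A" and clA: "closed A" using cl unfolding closed_operator_def by auto
  show ?thesis
  unfolding closed_sequential_limits
  proof (intro allI impI, elim conjE)
    fix x :: "nat \<Rightarrow> 'a" and l
    assume xR: "\<forall>n. x n \<in> (\<lambda>p. snd p - z *\<^sub>C fst p) ` A" and xl: "x \<longlonglongrightarrow> l"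
    have "\<forall>n. \<exists>q. q \<in> A \<and> x n = snd q - z *\<^sub>C fst q" using xR by blast
    then have "\<exists>p. \<forall>n. p n \<in> A \<and> x n = snd (p n) - z *\<^sub>C fst (p n)" by (rule choice)
    then obtain p where pA: "\<And>n. p n \<in> A" and xp: "\<And>n. x n = snd (p n) - z *\<^sub>C fst (p n)"
      by blast
    have xc: "Cauchy x" using xl by (rule LIMSEQ_imp_Cauchy)
    have bd: "e * norm (fst (p n) - fst (p m)) \<le> norm (x n - x m)" for n m
    proof -
      have "p n - p m \<in> A" using opA pA[of n] pA[of m] by (rule op_diff)
      from bnd[OF this] show ?thesis
        by (simp add: xp scaleC_diff_right algebra_simps)
    qed
    have fc: "Cauchy (\<lambda>n. fst (p n))"
    proof (rule metric_CauchyI)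
      fix r :: real assume r: "r > 0"
      then have "r * e > 0" using e by simp
      then obtain N where N: "\<forall>m\<ge>N. \<forall>n\<ge>N. dist (x m) (x n) < r * e"
        using xc unfolding Cauchy_def by blast
      show "\<exists>N. \<forall>m\<ge>N. \<forall>n\<ge>N. dist (fst (p m)) (fst (p n)) < r"
      proof (intro exI allI impI)
        fix m n assume "N \<le> m" "N \<le> n"
        then have "norm (x m - x n) < r * e" using N by (simp add: dist_norm)
        with bd[of m n] have "e * norm (fst (p m) - fst (p n)) < e * r" by (simp add: mult.commute)
        then show "dist (fst (p m)) (fst (p n)) < r" using e by (simp add: dist_norm)
      qed
    qed
    then obtain F where F: "(\<lambda>n. fst (p n)) \<longlonglongrightarrow> F" using Cauchy_convergent convergent_def by blast
    have "(\<lambda>n. x n + z *\<^sub>C fst (p n)) \<longlonglongrightarrow> l + z *\<^sub>C F"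
      by (intro tendsto_add xl bounded_linear.tendsto[OF bounded_linear_scaleC] F)
    then have K: "(\<lambda>n. snd (p n)) \<longlonglongrightarrow> l + z *\<^sub>C F" by (simp add: xp)
    have "(\<lambda>n. (fst (p n), snd (p n))) \<longlonglongrightarrow> (F, l + z *\<^sub>C F)"
      by (rule tendsto_Pair[OF F K])
    then have "p \<longlonglongrightarrow> (F, l + z *\<^sub>C F)" by simp
    then have "(F, l + z *\<^sub>C F) \<in> A" using closed_sequentially[OF clA, of p] pA by blast
    moreover have "l = snd (F, l + z *\<^sub>C F) - z *\<^sub>C fst (F, l + z *\<^sub>C F)" by simp
    ultimately show "l \<in> (\<lambda>p. snd p - z *\<^sub>C fst p) ` A" by blast
  qed
qed

lemma range_decomp:
  assumes opA: "is_operator A" and cl: "closed ((\<lambda>p. snd p - z *\<^sub>C fst p) ` A)"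
  shows "\<exists>p\<in>A. \<exists>w. (w, cnj z *\<^sub>C w) \<in> adjoint A \<and> y = (snd p - z *\<^sub>C fst p) + w"
proof -
  define R where "R = (\<lambda>p. snd p - z *\<^sub>C fst p) ` A"
  have sub: "csubspace R"
    unfolding csubspace_def R_def
  proof (intro conjI ballI allI impI)
    show "0 \<in> (\<lambda>p. snd p - z *\<^sub>C fst p) ` A" using op_zero[OF opA] by force
  next
    fix a b assume "a \<in> (\<lambda>p. snd p - z *\<^sub>C fst p) ` A" "b \<in> (\<lambda>p. snd p - z *\<^sub>C fst p) ` A"
    then obtain p q where pq: "p \<in> A" "q \<in> A" and ab: "a = snd p - z *\<^sub>C fst p" "b = snd q - z *\<^sub>C fst q" by blast
    have "p + q \<in> A" using opA pq by (rule op_add)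
    moreover have "a + b = snd (p + q) - z *\<^sub>C fst (p + q)"
      unfolding ab by (simp add: scaleC_add_right algebra_simps)
    ultimately show "a + b \<in> (\<lambda>p. snd p - z *\<^sub>C fst p) ` A" by blast
  next
    fix c a assume "a \<in> (\<lambda>p. snd p - z *\<^sub>C fst p) ` A"
    then obtain p where "p \<in> A" "a = snd p - z *\<^sub>C fst p" by blast
    moreover have "psc c p \<in> A" using opA \<open>p \<in> A\<close> by (rule op_psc)
    ultimately show "c *\<^sub>C a \<in> (\<lambda>p. snd p - z *\<^sub>C fst p) ` A"
      by (auto intro!: image_eqI[where x = "psc c p"] simp: scaleC_diff_right scaleC_scaleC mult.commute)
  qed
  obtain m where mR: "m \<in> R" and orth: "\<forall>u\<in>R. cinner (y - m) u = 0"
    using projection_thm[OF sub cl[folded R_def]] by blast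
  obtain p where pA: "p \<in> A" and mp: "m = snd p - z *\<^sub>C fst p" using mR unfolding R_def by blast
  have adjw: "(y - m, cnj z *\<^sub>C (y - m)) \<in> adjoint A"
    unfolding adj_iff
  proof
    fix q assume qA: "q \<in> A"
    have "cinner (y - m) (snd q - z *\<^sub>C fst q) = 0" using orth qA unfolding R_def by blast
    then have "cinner (snd q - z *\<^sub>C fst q) (y - m) = 0" by (metis cinner_commute complex_cnj_zero)
    then show "cinner (snd q) (y - m) = cinner (fst q) (cnj z *\<^sub>C (y - m))"
      by (simp add: cinner_diff_left cinner_scaleC_left cinner_scaleC_right)
  qed
  have eq: "y = (snd p - z *\<^sub>C fst p) + (y - m)" using mp by simp
  show ?thesis
    by (rule bexI[OF _ pA], rule exI[of _ "y - m"], rule conjI[OF adjw eq])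
qed





lemma symmetric_sub_adj: "symmetric_operator A \<Longrightarrow> A \<subseteq> adjoint A"
proof
  fix p assume sym: "symmetric_operator A" and pA: "p \<in> A"
  have opA: "is_operator A" using sym unfolding symmetric_operator_def by simp
  show "p \<in> adjoint A" unfolding adj_iff'
  proof
    fix q assume qA: "q \<in> A"
    have "fst p \<in> op_dom A" "fst q \<in> op_dom A" using pA qA op_dom_iff[of _ A] by (metis prod.collapse)+
    then have "cinner (op_app A (fst q)) (fst p) = cinner (fst q) (op_app A (fst p))"
      using sym unfolding symmetric_operator_def by blast
    moreover have "op_app A (fst q) = snd q" "op_app A (fst p) = snd p"
      using op_app_eq[OF opA] pA qA by (metis prod.collapse)+
    ultimately show "cinner (snd q) (fst p) = cinner (fst q) (snd p)" by simp
  qed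
qed

lemma symmetric_Im: "symmetric_operator A \<Longrightarrow> p \<in> A \<Longrightarrow> Im (cinner (snd p) (fst p)) = 0"
proof -
  assume sym: "symmetric_operator A" and pA: "p \<in> A"
  then have "p \<in> adjoint A" using symmetric_sub_adj by blast
  then have "cinner (snd p) (fst p) = cinner (fst p) (snd p)" using pA unfolding adj_iff' by blast
  then have "cinner (snd p) (fst p) = cnj (cinner (snd p) (fst p))" by (metis cinner_commute)
  then have "Im (cinner (snd p) (fst p)) = Im (cnj (cinner (snd p) (fst p)))"
    by (rule arg_cong)
  then have "Im (cinner (snd p) (fst p)) = - Im (cinner (snd p) (fst p))"
    by (simp only: cnj.sel)
  then show ?thesis by simp
qed

locale vn =
  fixes A0 :: "'h::chilbert_space operator" and vp vm :: 'h
  assumes cl0: "closed_operator A0" and sym0: "symmetric_operator A0"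
    and Np: "deficiency_space A0 \<i> = {c *\<^sub>C vp | c. True}" and vp0: "vp \<noteq> 0"
    and Nm: "deficiency_space A0 (- \<i>) = {c *\<^sub>C vm | c. True}" and vm0: "vm \<noteq> 0"
begin

definition "pp = (vp, \<i> *\<^sub>C vp)"
definition "pm = (vm, (- \<i>) *\<^sub>C vm)"
definition "P = (norm vp)\<^sup>2"
definition "Q = (norm vm)\<^sup>2"
definition "L a b = psc a pp + psc b pm"

lemma op0: "is_operator A0" using cl0 unfolding closed_operator_def by simp

lemma A0_adj: "A0 \<subseteq> adjoint A0" using sym0 by (rule symmetric_sub_adj)

lemma Im0: "p \<in> A0 \<Longrightarrow> Im (cinner (snd p) (fst p)) = 0" using sym0 by (rule symmetric_Im)

lemma P_pos: "P > 0" unfolding P_def using vp0 by simp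
lemma Q_pos: "Q > 0" unfolding Q_def using vm0 by simp

lemma defp: "(g, \<i> *\<^sub>C g) \<in> adjoint A0 \<longleftrightarrow> (\<exists>c. g = c *\<^sub>C vp)"
  using Np unfolding deficiency_space_def by (auto simp: set_eq_iff)

lemma defm: "(g, (- \<i>) *\<^sub>C g) \<in> adjoint A0 \<longleftrightarrow> (\<exists>c. g = c *\<^sub>C vm)"
  using Nm unfolding deficiency_space_def by (auto simp: set_eq_iff)

lemma pp_adj: "pp \<in> adjoint A0" unfolding pp_def using defp[of vp] by (metis scaleC_one)
lemma pm_adj: "pm \<in> adjoint A0" unfolding pm_def using defm[of vm] by (metis scaleC_one)

lemma L_adj: "L a b \<in> adjoint A0"
  unfolding L_def by (intro adj_add adj_psc pp_adj pm_adj)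

lemma om_pp_pp: "om pp pp = 2 * \<i> * complex_of_real P"
  unfolding om_def pp_def P_def
  by (simp add: cinner_scaleC_left cinner_scaleC_right cinner_self)

lemma om_pm_pm: "om pm pm = - 2 * \<i> * complex_of_real Q"
  unfolding om_def pm_def Q_def
  by (simp add: cinner_scaleC_left cinner_scaleC_right cinner_self)

lemma om_pp_pm: "om pp pm = 0"
  unfolding om_def pp_def pm_def
  by (simp add: cinner_scaleC_left cinner_scaleC_right)

lemma om_pm_pp: "om pm pp = 0"
  unfolding om_def pp_def pm_def
  by (simp add: cinner_scaleC_left cinner_scaleC_right)

lemma om_L: "om (L a b) (L c d) = 2 * \<i> * (a * cnj c * complex_of_real P - b * cnj d * complex_of_real Q)"
  unfolding L_def
  by (simp add: om_add_left om_add_right om_psc_left om_psc_right om_pp_pp om_pm_pm om_pp_pm om_pm_pp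
                algebra_simps)

lemma L_add: "L a b + L c d = L (a + c) (b + d)"
  unfolding L_def by (simp add: psc_add_left algebra_simps)

lemma L_diff: "L a b - L c d = L (a - c) (b - d)"
  unfolding L_def by (simp add: psc_diff_left algebra_simps)

lemma L_psc: "psc t (L a b) = L (t * a) (t * b)"
  unfolding L_def by (simp add: psc_add psc_psc)

lemma L_zero: "L 0 0 = 0" unfolding L_def by simp

lemma L_A0: "L a b \<in> A0 \<Longrightarrow> a = 0 \<and> b = 0"
proof -
  assume h: "L a b \<in> A0"
  have "om (L a b) (L 1 0) = 0" by (rule om_A_adj[OF h L_adj])
  then have a: "a = 0" using P_pos by (simp add: om_L)
  have "om (L a b) (L 0 1) = 0" by (rule om_A_adj[OF h L_adj])
  then have b: "b = 0" using Q_pos by (simp add: om_L)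
  from a b show ?thesis ..
qed

lemma coords_unique:
  assumes "x - L a b \<in> A0" "x - L c d \<in> A0" shows "a = c \<and> b = d"
proof -
  have "(x - L c d) - (x - L a b) \<in> A0" using op_diff[OF op0 assms(2,1)] .
  then have "L (a - c) (b - d) \<in> A0" by (simp add: L_diff[symmetric])
  then have "a - c = 0 \<and> b - d = 0" by (rule L_A0)
  then show ?thesis by simp
qed

lemma om_coords:
  assumes "x - L a b \<in> A0" "y - L c d \<in> A0" "y \<in> adjoint A0"
  shows "om x y = om (L a b) (L c d)"
proof -
  have "om x y = om (x - L a b) y + om (L a b) y" by (simp add: om_diff_left)
  also have "om (x - L a b) y = 0" using om_A_adj[OF assms(1,3)] .
  also have "om (L a b) y = om (L a b) (y - L c d) + om (L a b) (L c d)" by (simp add: om_diff_right)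
  also have "om (L a b) (y - L c d) = 0" using om_adj_A[OF L_adj assms(2)] .
  finally show ?thesis by simp
qed

lemma bound_i: "p \<in> A0 \<Longrightarrow> 1 * norm (fst p) \<le> norm (snd p - \<i> *\<^sub>C fst p)"
proof -
  assume pA: "p \<in> A0"
  have "(norm (snd p - \<i> *\<^sub>C fst p))\<^sup>2 = (norm (snd p))\<^sup>2 + (norm (fst p))\<^sup>2 - 2 * Re (cinner (snd p) (\<i> *\<^sub>C fst p))"
    using norm_diff_sq[of "snd p" "\<i> *\<^sub>C fst p"] by (simp add: norm_scaleC)
  also have "Re (cinner (snd p) (\<i> *\<^sub>C fst p)) = Im (cinner (snd p) (fst p))"
    by (simp add: cinner_scaleC_right)
  also have "\<dots> = 0" using Im0[OF pA] .
  finally have "(norm (fst p))\<^sup>2 \<le> (norm (snd p - \<i> *\<^sub>C fst p))\<^sup>2" by simp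
  then have "norm (fst p) \<le> norm (snd p - \<i> *\<^sub>C fst p)" by (rule power2_le_imp_le) simp
  then show ?thesis by simp
qed

lemma von_neumann: "x \<in> adjoint A0 \<Longrightarrow> \<exists>a b. x - L a b \<in> A0"
proof -
  assume xadj: "x \<in> adjoint A0"
  have cl: "closed ((\<lambda>p. snd p - \<i> *\<^sub>C fst p) ` A0)"
    by (rule range_closed[OF cl0, of 1]) (use bound_i in auto)
  obtain p w where pA: "p \<in> A0" and wadj: "(w, cnj \<i> *\<^sub>C w) \<in> adjoint A0"
    and dec: "snd x - \<i> *\<^sub>C fst x = (snd p - \<i> *\<^sub>C fst p) + w"
    using range_decomp[OF op0 cl, of "snd x - \<i> *\<^sub>C fst x"] by blast
  obtain c where wc: "w = c *\<^sub>C vm" using wadj defm by auto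
  define \<beta> where "\<beta> = \<i> * c / 2"
  define r where "r = x - p - psc \<beta> pm"
  have radj: "r \<in> adjoint A0" unfolding r_def
    using A0_adj pA xadj by (intro adj_diff adj_psc pm_adj) auto
  define v1 where "v1 = (\<i> * \<beta>) *\<^sub>C vm"
  have s1: "snd r = snd x - snd p + v1" unfolding r_def pm_def v1_def
    by (simp add: scaleC_scaleC scaleC_minus_left scaleC_minus_right mult.commute)
  have s2: "\<i> *\<^sub>C fst r = \<i> *\<^sub>C fst x - \<i> *\<^sub>C fst p - v1" unfolding r_def pm_def v1_def
    by (simp add: scaleC_scaleC scaleC_diff_right)
  have s3: "(2 * \<i> * \<beta>) *\<^sub>C vm = v1 + v1" unfolding v1_def
    by (simp add: mult.assoc flip: scaleC_add_left)
  have "snd r - \<i> *\<^sub>C fst r = (snd x - \<i> *\<^sub>C fst x) - (snd p - \<i> *\<^sub>C fst p) + (2 * \<i> * \<beta>) *\<^sub>C vm"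
    unfolding s1 s2 s3 by (simp add: algebra_simps)
  also have "\<dots> = c *\<^sub>C vm + (2 * \<i> * \<beta>) *\<^sub>C vm" using dec wc by simp
  also have "\<dots> = 0" unfolding \<beta>_def by (simp flip: scaleC_add_left)
  finally have "snd r = \<i> *\<^sub>C fst r" by simp
  then have "(fst r, \<i> *\<^sub>C fst r) \<in> adjoint A0" using radj by (metis prod.collapse)
  then obtain \<alpha> where fr: "fst r = \<alpha> *\<^sub>C vp" using defp by auto
  have "r = psc \<alpha> pp" using fr \<open>snd r = \<i> *\<^sub>C fst r\<close>
    unfolding pp_def psc_def by (simp add: scaleC_scaleC mult.commute prod_eq_iff)
  then have "x - L \<alpha> \<beta> = p" unfolding r_def L_def by (simp add: algebra_simps)
  with pA show ?thesis by blast
qed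

end




lemma three_eig:
  fixes c11 c12 c21 c22 a1 b1 a2 b2 a3 b3 t1 t2 t3 :: complex
  assumes e1: "c11*a1 + c12*b1 = t1*a1" "c21*a1 + c22*b1 = t1*b1"
    and e2: "c11*a2 + c12*b2 = t2*a2" "c21*a2 + c22*b2 = t2*b2"
    and e3: "c11*a3 + c12*b3 = t3*a3" "c21*a3 + c22*b3 = t3*b3"
    and d12: "a1*b2 - b1*a2 \<noteq> 0" and d13: "a1*b3 - b1*a3 \<noteq> 0" and d23: "a2*b3 - b2*a3 \<noteq> 0"
  shows "c12 = 0 \<and> c21 = 0 \<and> c11 = c22"
proof -
  have key: "(ti + tj) * (ai*bj - bi*aj) = (c11 + c22) * (ai*bj - bi*aj)"
    if "c11*ai + c12*bi = ti*ai" "c21*ai + c22*bi = ti*bi"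
       "c11*aj + c12*bj = tj*aj" "c21*aj + c22*bj = tj*bj" for ai bi aj bj ti tj :: complex
  proof -
    have "(ti + tj) * (ai*bj - bi*aj) = (ti*ai)*bj - (ti*bi)*aj + ai*(tj*bj) - bi*(tj*aj)"
      by (simp add: algebra_simps)
    also have "\<dots> = (c11*ai + c12*bi)*bj - (c21*ai + c22*bi)*aj + ai*(c21*aj + c22*bj) - bi*(c11*aj + c12*bj)"
      using that by simp
    also have "\<dots> = (c11 + c22) * (ai*bj - bi*aj)" by (simp add: algebra_simps)
    finally show ?thesis .
  qed
  have s12: "t1 + t2 = c11 + c22" using key[OF e1 e2] d12 by simp
  have s13: "t1 + t3 = c11 + c22" using key[OF e1 e3] d13 by simp
  have s23: "t2 + t3 = c11 + c22" using key[OF e2 e3] d23 by simp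
  have "t1 + t3 = t2 + t3" using s13 s23 by simp
  then have t12: "t1 = t2" by simp
  have x1: "(c11 - t1) * a1 + c12 * b1 = 0" using e1 by (simp add: algebra_simps)
  have x2: "(c11 - t1) * a2 + c12 * b2 = 0" using e2 t12 by (simp add: algebra_simps)
  have y1: "c21 * a1 + (c22 - t1) * b1 = 0" using e1 by (simp add: algebra_simps)
  have y2: "c21 * a2 + (c22 - t1) * b2 = 0" using e2 t12 by (simp add: algebra_simps)
  have "(c11 - t1) * (a1*b2 - b1*a2) = ((c11 - t1) * a1 + c12 * b1) * b2 - ((c11 - t1) * a2 + c12 * b2) * b1"
    by (simp add: algebra_simps)
  then have r1: "c11 = t1" using x1 x2 d12 by simp
  have "c12 * (a1*b2 - b1*a2) = ((c11 - t1) * a2 + c12 * b2) * a1 - ((c11 - t1) * a1 + c12 * b1) * a2"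
    by (simp add: algebra_simps)
  then have r2: "c12 = 0" using x1 x2 d12 by simp
  have "c21 * (a1*b2 - b1*a2) = (c21 * a1 + (c22 - t1) * b1) * b2 - (c21 * a2 + (c22 - t1) * b2) * b1"
    by (simp add: algebra_simps)
  then have r3: "c21 = 0" using y1 y2 d12 by simp
  have "(c22 - t1) * (a1*b2 - b1*a2) = (c21 * a2 + (c22 - t1) * b2) * a1 - (c21 * a1 + (c22 - t1) * b1) * a2"
    by (simp add: algebra_simps)
  then have r4: "c22 = t1" using y1 y2 d12 by simp
  show ?thesis using r1 r2 r3 r4 by simp
qed


lemma two_eig_form:
  fixes c11 c12 c21 c22 a1 b1 a2 b2 t1 t2 :: complex and P Q s :: real
  assumes P: "P > 0" and Q: "Q > 0" and s: "s > 0"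
    and pres: "\<And>u1 u2 x1 x2. (c11*u1 + c12*u2) * cnj (c11*x1 + c12*x2) * P - (c21*u1 + c22*u2) * cnj (c21*x1 + c22*x2) * Q
                 = s * (u1 * cnj x1 * P - u2 * cnj x2 * Q)"
    and e1: "c11*a1 + c12*b1 = t1*a1" "c21*a1 + c22*b1 = t1*b1"
    and e2: "c11*a2 + c12*b2 = t2*a2" "c21*a2 + c22*b2 = t2*b2"
    and d12: "a1*b2 - b1*a2 \<noteq> 0"
    and X: "(cmod a1)\<^sup>2 * P - (cmod b1)\<^sup>2 * Q \<ge> 0"
    and Y: "(cmod a2)\<^sup>2 * P - (cmod b2)\<^sup>2 * Q > 0"
  shows "c12 = 0 \<and> c21 = 0 \<and> c11 = c22"
proof -
  define a3 where "a3 = cnj b2 * Q"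
  define b3 where "b3 = cnj a2 * P"
  have nsq: "z * cnj z = complex_of_real ((cmod z)\<^sup>2)" for z by (rule complex_norm_square[symmetric])
  have w22: "a2 * cnj a2 * P - b2 * cnj b2 * Q = complex_of_real ((cmod a2)\<^sup>2 * P - (cmod b2)\<^sup>2 * Q)"
    by (simp add: nsq)
  have a2: "a2 \<noteq> 0"
  proof
    assume "a2 = 0"
    then have "(cmod a2)\<^sup>2 * P - (cmod b2)\<^sup>2 * Q \<le> 0" using Q by simp
    with Y show False by linarith
  qed
  have t2: "t2 \<noteq> 0"
  proof
    assume t20: "t2 = 0"
    have "s * (a2 * cnj a2 * P - b2 * cnj b2 * Q) = 0"
      using pres[of a2 b2 a2 b2] e2 t20 by simp
    then have "complex_of_real s * complex_of_real ((cmod a2)\<^sup>2 * P - (cmod b2)\<^sup>2 * Q) = 0"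
      by (simp only: w22)
    then have "s * ((cmod a2)\<^sup>2 * P - (cmod b2)\<^sup>2 * Q) = 0" by (metis of_real_eq_0_iff of_real_mult)
    then show False using s Y by simp
  qed
  define z1 where "z1 = c11*a3 + c12*b3"
  define z2 where "z2 = c21*a3 + c22*b3"
  have "z1 * cnj (t2*a2) * P - z2 * cnj (t2*b2) * Q = s * (a3 * cnj a2 * P - b3 * cnj b2 * Q)"
    using pres[of a3 b3 a2 b2] e2 unfolding z1_def z2_def by simp
  also have "a3 * cnj a2 * P - b3 * cnj b2 * Q = 0" unfolding a3_def b3_def by (simp add: algebra_simps)
  finally have "cnj t2 * (z1 * cnj a2 * P - z2 * cnj b2 * Q) = 0" by (simp add: algebra_simps)
  then have zz: "z1 * cnj a2 * P = z2 * cnj b2 * Q" using t2 by simp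
  define t3 where "t3 = z2 / (cnj a2 * P)"
  have cP: "cnj a2 * complex_of_real P \<noteq> 0" using a2 P by simp
  have e3b: "c21*a3 + c22*b3 = t3*b3"
  proof -
    have "t3 * b3 = z2" unfolding t3_def b3_def using cP by simp
    then show ?thesis unfolding z2_def by simp
  qed
  have e3a: "c11*a3 + c12*b3 = t3*a3"
  proof -
    have "t3 * a3 = z2 * cnj b2 * Q / (cnj a2 * P)" unfolding t3_def a3_def by simp
    also have "\<dots> = z1 * cnj a2 * P / (cnj a2 * P)" using zz by simp
    also have "\<dots> = z1" using cP by simp
    finally show ?thesis unfolding z1_def by simp
  qed
  have d23: "a2*b3 - b2*a3 \<noteq> 0"
  proof -
    have "a2*b3 - b2*a3 = a2 * cnj a2 * P - b2 * cnj b2 * Q" unfolding a3_def b3_def by (simp add: algebra_simps)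
    also have "\<dots> = complex_of_real ((cmod a2)\<^sup>2 * P - (cmod b2)\<^sup>2 * Q)" by (rule w22)
    finally show ?thesis using Y by (metis of_real_eq_0_iff less_irrefl)
  qed
  have d13: "a1*b3 - b1*a3 \<noteq> 0"
  proof
    assume "a1*b3 - b1*a3 = 0"
    then have "a1 * cnj a2 * P = b1 * cnj b2 * Q" unfolding a3_def b3_def by (simp add: algebra_simps)
    then have "cmod (a1 * cnj a2 * P) = cmod (b1 * cnj b2 * Q)" by simp
    then have "cmod a1 * cmod a2 * P = cmod b1 * cmod b2 * Q" using P Q by (simp add: norm_mult)
    then have eq: "((cmod a1)\<^sup>2 * P) * ((cmod a2)\<^sup>2 * P) = ((cmod b1)\<^sup>2 * Q) * ((cmod b2)\<^sup>2 * Q)"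
      by (metis (no_types, lifting) mult.assoc mult.left_commute power2_eq_square)
    define A1 where "A1 = (cmod a1)\<^sup>2 * P"
    define A2 where "A2 = (cmod a2)\<^sup>2 * P"
    define B1 where "B1 = (cmod b1)\<^sup>2 * Q"
    define B2 where "B2 = (cmod b2)\<^sup>2 * Q"
    have B1: "B1 \<ge> 0" "B2 \<ge> 0" unfolding B1_def B2_def using Q by simp_all
    have AB: "A1 \<ge> B1" "A2 > B2" using X Y unfolding A1_def A2_def B1_def B2_def by simp_all
    have eq': "A1 * A2 = B1 * B2" using eq unfolding A1_def A2_def B1_def B2_def .
    have "A1 * A2 \<ge> B1 * A2" using AB B1 by (intro mult_right_mono) simp_all
    have b10: "B1 = 0"
    proof (rule ccontr)
      assume "B1 \<noteq> 0"
      then have "B1 > 0" using B1 by simp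
      then have "B1 * A2 > B1 * B2" using AB by simp
      then show False using \<open>A1 * A2 \<ge> B1 * A2\<close> eq' by simp
    qed
    then have "b1 = 0" unfolding B1_def using Q by simp
    have "A2 > 0" using AB B1 by simp
    then have "A1 = 0" using eq' b10 by simp
    then have "a1 = 0" unfolding A1_def using P by simp
    with \<open>b1 = 0\<close> d12 show False by simp
  qed
  show ?thesis by (rule three_eig[OF e1 e2 e3a e3b d12 d13 d23])
qed



lemma selfadj_dissipative: "self_adjoint B \<Longrightarrow> dissipative B"
proof -
  assume sa: "self_adjoint B"
  then have opB: "is_operator B" and eq: "B = adjoint B" unfolding self_adjoint_def by auto
  show ?thesis unfolding dissipative_iff[OF opB]
  proof
    fix p assume pB: "p \<in> B"
    then have "p \<in> adjoint B" using eq by simp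
    then have "cinner (snd p) (fst p) = cinner (fst p) (snd p)" using pB unfolding adj_iff' by blast
    then have "cinner (snd p) (fst p) = cnj (cinner (snd p) (fst p))" by (metis cinner_commute)
    then have "Im (cinner (snd p) (fst p)) = Im (cnj (cinner (snd p) (fst p)))" by (rule arg_cong)
    then have "Im (cinner (snd p) (fst p)) = - Im (cinner (snd p) (fst p))" by (simp only: cnj.sel)
    then show "Im (cinner (snd p) (fst p)) \<ge> 0" by simp
  qed
qed

context vn
begin

definition "line B a b \<longleftrightarrow> L a b \<in> B \<and> \<not> (a = 0 \<and> b = 0) \<and> (\<forall>y\<in>B. \<exists>t. y - psc t (L a b) \<in> A0)"

lemma L_01: "L 0 1 = pm" unfolding L_def by simp
lemma L_10: "L 1 0 = pp" unfolding L_def by simp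

lemma propor: "a \<noteq> 0 \<Longrightarrow> a * d = b * c \<Longrightarrow> psc (c / a) (L a b) = L c d"
proof -
  assume a: "a \<noteq> 0" and det: "a * d = b * c"
  have "c / a * b = d" using det a by (metis mult.commute nonzero_mult_div_cancel_left times_divide_eq_left)
  moreover have "c / a * a = c" using a by simp
  ultimately show ?thesis by (simp add: L_psc)
qed

lemma pm_not_dissip: "Im (cinner (snd pm) (fst pm)) < 0"
  unfolding pm_def using Q_pos by (simp add: cinner_scaleC_left cinner_self Q_def)

lemma ext_line:
  assumes dB: "dissipative B" and sub: "A0 \<subseteq> B" "B \<subseteq> adjoint A0" and ne: "B \<noteq> A0"
  shows "\<exists>a b. line B a b"
proof -
  have opB: "is_operator B" using dB unfolding dissipative_def by simp
  obtain x where xB: "x \<in> B" and xA: "x \<notin> A0" using sub ne by blast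
  then obtain a b where xab: "x - L a b \<in> A0" using von_neumann sub by blast
  have LB: "L a b \<in> B"
  proof -
    have "x - (x - L a b) \<in> B" using op_diff[OF opB xB] xab sub by blast
    then show ?thesis by simp
  qed
  have nz: "\<not> (a = 0 \<and> b = 0)"
  proof
    assume "a = 0 \<and> b = 0"
    then have "x \<in> A0" using xab by (simp add: L_zero)
    with xA show False by simp
  qed
  have "\<forall>y\<in>B. \<exists>t. y - psc t (L a b) \<in> A0"
  proof
    fix y assume yB: "y \<in> B"
    then obtain c d where ycd: "y - L c d \<in> A0" using von_neumann sub by blast
    have LcdB: "L c d \<in> B"
    proof -
      have "y - (y - L c d) \<in> B" using op_diff[OF opB yB] ycd sub by blast
      then show ?thesis by simp
    qed
    have det: "a * d = b * c"
    proof (rule ccontr)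
      assume "a * d \<noteq> b * c"
      then have D: "a * d - b * c \<noteq> 0" by simp
      have "psc (a / (a * d - b * c)) (L c d) - psc (c / (a * d - b * c)) (L a b) \<in> B"
        using op_diff[OF opB op_psc[OF opB LcdB] op_psc[OF opB LB]] .
      also have "psc (a / (a * d - b * c)) (L c d) - psc (c / (a * d - b * c)) (L a b) = L 0 1"
      proof -
        have e1: "a / (a * d - b * c) * c - c / (a * d - b * c) * a = 0" by simp
        have e2: "a / (a * d - b * c) * d - c / (a * d - b * c) * b = 1"
        proof -
          have "a / (a * d - b * c) * d - c / (a * d - b * c) * b = (a * d - b * c) / (a * d - b * c)"
            by (simp only: times_divide_eq_left diff_divide_distrib mult.commute[of c b])
          also have "\<dots> = 1" by (rule divide_self[OF D])
          finally show ?thesis .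
        qed
        show ?thesis by (simp only: L_psc L_diff e1 e2)
      qed
      finally have "pm \<in> B" by (simp add: L_01)
      then have "Im (cinner (snd pm) (fst pm)) \<ge> 0" using dB dissipative_iff[OF opB] by blast
      with pm_not_dissip show False by simp
    qed
    show "\<exists>t. y - psc t (L a b) \<in> A0"
    proof (cases "a = 0")
      case True
      then have b0: "b \<noteq> 0" using nz by simp
      then have "c = 0" using det True by simp
      then have "psc (d / b) (L a b) = L c d" using True b0 by (simp add: L_psc)
      then show ?thesis using ycd by metis
    next
      case False
      then have "psc (c / a) (L a b) = L c d" using det by (rule propor)
      then show ?thesis using ycd by metis
    qed
  qed
  then show ?thesis unfolding line_def using LB nz by blast
qed

lemma line_coords:
  assumes "line B a b" "y \<in> B" "y - L c d \<in> A0" shows "a * d = b * c"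
proof -
  obtain t where "y - psc t (L a b) \<in> A0" using assms unfolding line_def by blast
  then have "y - L (t * a) (t * b) \<in> A0" by (simp add: L_psc)
  then have "t * a = c \<and> t * b = d" using coords_unique assms(3) by blast
  then show ?thesis by (auto simp: algebra_simps)
qed

lemma line_mem:
  assumes ln: "line B a b" and opB: "is_operator B" and sub: "A0 \<subseteq> B"
    and xcd: "x - L c d \<in> A0" and det: "a * d = b * c"
  shows "x \<in> B"
proof -
  have LB: "L a b \<in> B" and nz: "\<not> (a = 0 \<and> b = 0)" using ln unfolding line_def by auto
  obtain t where t: "L c d = psc t (L a b)"
  proof (cases "a = 0")
    case True
    then have b0: "b \<noteq> 0" using nz by simp
    then have "c = 0" using det True by simp
    then have "psc (d / b) (L a b) = L c d" using True b0 by (simp add: L_psc)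
    then show ?thesis using that by metis
  next
    case False
    then have "psc (c / a) (L a b) = L c d" using det by (rule propor)
    then show ?thesis using that by metis
  qed
  have "(x - L c d) + psc t (L a b) \<in> B"
    using op_add[OF opB _ op_psc[OF opB LB]] xcd sub by blast
  then show ?thesis using t by simp
qed

lemma line_sub:
  assumes l1: "line B a b" and l2: "line B' c d" and opB': "is_operator B'" and sub': "A0 \<subseteq> B'"
    and det: "a * d = b * c"
  shows "B \<subseteq> B'"
proof
  fix y assume yB: "y \<in> B"
  then obtain t where "y - psc t (L a b) \<in> A0" using l1 unfolding line_def by blast
  then have yt: "y - L (t * a) (t * b) \<in> A0" by (simp add: L_psc)
  have "c * (t * b) = d * (t * a)" using det by (simp add: algebra_simps)
  then show "y \<in> B'" using line_mem[OF l2 opB' sub' yt] by simp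
qed

definition "w0 a b c d = a * cnj c * complex_of_real P - b * cnj d * complex_of_real Q"

lemma om_L_w0: "om (L a b) (L c d) = 2 * \<i> * w0 a b c d"
  unfolding w0_def by (rule om_L)

lemma w0_self: "w0 a b a b = complex_of_real ((cmod a)\<^sup>2 * P - (cmod b)\<^sup>2 * Q)"
proof -
  have "a * cnj a = complex_of_real ((cmod a)\<^sup>2)" "b * cnj b = complex_of_real ((cmod b)\<^sup>2)"
    by (rule complex_norm_square[symmetric])+
  then show ?thesis unfolding w0_def by simp
qed

lemma line_dissip:
  assumes ln: "line B a b" and dB: "dissipative B"
  shows "(cmod a)\<^sup>2 * P - (cmod b)\<^sup>2 * Q \<ge> 0"
proof -
  have opB: "is_operator B" using dB unfolding dissipative_def by simp
  have LB: "L a b \<in> B" using ln unfolding line_def by simp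
  then have im: "Im (cinner (snd (L a b)) (fst (L a b))) \<ge> 0" using dB dissipative_iff[OF opB] by blast
  have "\<i> * complex_of_real (2 * Im (cinner (snd (L a b)) (fst (L a b)))) = 2 * \<i> * complex_of_real ((cmod a)\<^sup>2 * P - (cmod b)\<^sup>2 * Q)"
    using om_self[of "L a b"] om_L_w0[of a b a b] w0_self[of a b] by simp
  then have "Im (cinner (snd (L a b)) (fst (L a b))) = (cmod a)\<^sup>2 * P - (cmod b)\<^sup>2 * Q"
    by (simp add: complex_eq_iff)
  with im show ?thesis by simp
qed

lemma line_selfadj:
  assumes ln: "line B a b" and opB: "is_operator B" and sub: "A0 \<subseteq> B" "B \<subseteq> adjoint A0"
    and iso: "(cmod a)\<^sup>2 * P = (cmod b)\<^sup>2 * Q"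
  shows "self_adjoint B"
proof -
  have LB: "L a b \<in> B" and nz: "\<not> (a = 0 \<and> b = 0)" using ln unfolding line_def by auto
  have w: "w0 a b a b = 0" using iso by (simp add: w0_self)
  have dense: "densely_defined B"
  proof -
    have "op_dom A0 \<subseteq> op_dom B" using sub unfolding op_dom_def by auto
    then have "closure (op_dom A0) \<subseteq> closure (op_dom B)" by (rule closure_mono)
    moreover have "closure (op_dom A0) = UNIV" using sym0 unfolding symmetric_operator_def densely_defined_def by simp
    ultimately show ?thesis unfolding densely_defined_def by blast
  qed
  have "B \<subseteq> adjoint B"
  proof
    fix x assume xB: "x \<in> B"
    show "x \<in> adjoint B" unfolding adj_iff'
    proof
      fix y assume yB: "y \<in> B"
      obtain s where s: "x - psc s (L a b) \<in> A0" using ln xB unfolding line_def by blast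
      obtain t where t: "y - psc t (L a b) \<in> A0" using ln yB unfolding line_def by blast
      have s': "x - L (s * a) (s * b) \<in> A0" using s by (simp add: L_psc)
      have t': "y - L (t * a) (t * b) \<in> A0" using t by (simp add: L_psc)
      have "om y x = om (L (t * a) (t * b)) (L (s * a) (s * b))"
        using om_coords[OF t' s'] xB sub by blast
      also have "\<dots> = 2 * \<i> * (t * cnj s * w0 a b a b)" by (simp add: om_L_w0 w0_def algebra_simps)
      also have "\<dots> = 0" using w by simp
      finally show "cinner (snd y) (fst x) = cinner (fst y) (snd x)" unfolding om_def by simp
    qed
  qed
  moreover have "adjoint B \<subseteq> B"
  proof
    fix y assume yadj: "y \<in> adjoint B"
    then have yA: "y \<in> adjoint A0" using adj_anti[OF sub(1)] by blast
    then obtain c d where ycd: "y - L c d \<in> A0" using von_neumann by blast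
    have "om (L a b) y = 0" using om_A_adj[OF LB yadj] .
    moreover have "om (L a b) y = om (L a b) (L c d)"
      using om_coords[of "L a b" a b y c d] ycd yA by (simp add: op_zero[OF op0])
    ultimately have "w0 a b c d = 0" by (simp add: om_L_w0)
    then have e1: "a * cnj c * P = b * cnj d * Q" unfolding w0_def by simp
    then have "cnj (a * cnj c * complex_of_real P) = cnj (b * cnj d * complex_of_real Q)" by (rule arg_cong)
    then have e2: "cnj a * c * P = cnj b * d * Q" by simp
    have e3: "a * cnj a * P = b * cnj b * Q" using w unfolding w0_def by simp
    have a0: "a \<noteq> 0"
    proof
      assume "a = 0"
      then have "b * cnj b * Q = 0" using e3 by simp
      then have "b = 0" using Q_pos by simp
      with \<open>a = 0\<close> nz show False by simp
    qed
    have "(b * c) * (cnj a * P) = (a * d) * (cnj a * P)"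
    proof -
      have "(b * c) * (cnj a * P) = b * (cnj a * c * P)" by (simp add: algebra_simps)
      also have "\<dots> = b * (cnj b * d * Q)" using e2 by simp
      also have "\<dots> = d * (b * cnj b * Q)" by (simp add: algebra_simps)
      also have "\<dots> = d * (a * cnj a * P)" using e3 by simp
      finally show ?thesis by (simp add: algebra_simps)
    qed
    then have "b * c = a * d" using a0 P_pos by simp
    then show "y \<in> B" using line_mem[OF ln opB sub(1) ycd] by simp
  qed
  ultimately show ?thesis unfolding self_adjoint_def using opB dense by blast
qed

lemma selfadj_line_iso:
  assumes ln: "line B a b" and sa: "self_adjoint B"
  shows "(cmod a)\<^sup>2 * P = (cmod b)\<^sup>2 * Q"
proof -
  have LB: "L a b \<in> B" using ln unfolding line_def by simp
  then have "L a b \<in> adjoint B" using sa unfolding self_adjoint_def by simp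
  then have "om (L a b) (L a b) = 0" using om_A_adj[OF LB] by simp
  then have "w0 a b a b = 0" by (simp add: om_L_w0)
  then have "complex_of_real ((cmod a)\<^sup>2 * P - (cmod b)\<^sup>2 * Q) = 0" by (simp only: w0_self)
  then have "(cmod a)\<^sup>2 * P - (cmod b)\<^sup>2 * Q = 0" by (simp only: of_real_eq_0_iff)
  then show ?thesis by simp
qed

lemma A0_not_selfadj: "A0 \<noteq> adjoint A0"
proof
  assume "A0 = adjoint A0"
  then have "L 1 0 \<in> A0" using L_adj by simp
  then have "(1::complex) = 0 \<and> (0::complex) = 0" by (rule L_A0)
  then show False by simp
qed

end





lemma unitary_add: "unitary V \<Longrightarrow> V (x + y) = V x + V y" unfolding unitary_def by blast
lemma unitary_scaleC: "unitary V \<Longrightarrow> V (c *\<^sub>C x) = c *\<^sub>C V x" unfolding unitary_def by blast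
lemma unitary_cinner: "unitary V \<Longrightarrow> cinner (V x) (V y) = cinner x y" unfolding unitary_def by blast
lemma unitary_inj: "unitary V \<Longrightarrow> inj V" by (simp add: unitary_def bij_def)
lemma unitary_diff: "unitary V \<Longrightarrow> V (x - y) = V x - V y"
proof -
  assume u: "unitary V"
  have "V (x - y + y) = V (x - y) + V y" by (rule unitary_add[OF u])
  then have "V x = V (x - y) + V y" by simp
  then show ?thesis by (simp add: eq_diff_eq)
qed
lemma unitary_inv: "unitary V \<Longrightarrow> inv V (V x) = x" by (rule inv_f_f[OF unitary_inj])
lemma unitary_norm: "unitary V \<Longrightarrow> norm (V x) = norm x"
  using unitary_cinner[of V x x] by (simp add: norm_eq_sqrt_cinner)

definition Sg :: "(affine \<Rightarrow> 'h::chilbert_space \<Rightarrow> 'h) \<Rightarrow> affine \<Rightarrow> 'h \<times> 'h \<Rightarrow> 'h \<times> 'h" where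
  "Sg U g p = (U g (fst p), (1 / complex_of_real (fst g)) *\<^sub>C (U g (snd p) - complex_of_real (snd g) *\<^sub>C U g (fst p)))"

lemma solve_a:
  fixes X Y f :: "'a::complex_inner"
  assumes a: "(a::real) > 0" and h: "X = complex_of_real a *\<^sub>C Y + complex_of_real b *\<^sub>C f"
  shows "Y = (1 / complex_of_real a) *\<^sub>C (X - complex_of_real b *\<^sub>C f)"
proof -
  have "X - complex_of_real b *\<^sub>C f = complex_of_real a *\<^sub>C Y" using h by simp
  then have "(1 / complex_of_real a) *\<^sub>C (X - complex_of_real b *\<^sub>C f) = (1 / complex_of_real a * complex_of_real a) *\<^sub>C Y"
    by (simp add: scaleC_scaleC)
  also have "\<dots> = Y" using a by (simp add: scaleC_one)
  finally show ?thesis by simp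
qed

lemma solve_a':
  fixes X Y f :: "'a::complex_inner"
  assumes a: "(a::real) > 0" and h: "Y = (1 / complex_of_real a) *\<^sub>C (X - complex_of_real b *\<^sub>C f)"
  shows "X = complex_of_real a *\<^sub>C Y + complex_of_real b *\<^sub>C f"
proof -
  have "complex_of_real a *\<^sub>C Y = (complex_of_real a * (1 / complex_of_real a)) *\<^sub>C (X - complex_of_real b *\<^sub>C f)"
    using h by (simp add: scaleC_scaleC)
  also have "\<dots> = X - complex_of_real b *\<^sub>C f" using a by (simp add: scaleC_one)
  finally show ?thesis by (simp add: algebra_simps)
qed

lemma Ginv_S:
  assumes inv: "G_invariant G U B" and g: "g \<in> G" and un: "unitary (U g)" and a: "fst g > 0"
    and pB: "p \<in> B"
  shows "Sg U g p \<in> B"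
proof -
  have opB: "is_operator B" using inv unfolding G_invariant_def closed_operator_def by simp
  have dom: "U g ` op_dom B = op_dom B"
    and frm: "\<And>f. f \<in> op_dom B \<Longrightarrow> U g (op_app B (inv (U g) f))
         = complex_of_real (fst g) *\<^sub>C op_app B f + complex_of_real (snd g) *\<^sub>C f"
    using inv g unfolding G_invariant_def by auto
  have fd: "fst p \<in> op_dom B" using pB op_dom_iff by (metis prod.collapse)
  then have fd': "U g (fst p) \<in> op_dom B" using dom by blast
  have "op_app B (inv (U g) (U g (fst p))) = snd p"
    using op_app_eq[OF opB] pB by (simp add: unitary_inv[OF un])
  with frm[OF fd'] have "U g (snd p) = complex_of_real (fst g) *\<^sub>C op_app B (U g (fst p)) + complex_of_real (snd g) *\<^sub>C U g (fst p)"
    by simp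
  then have "op_app B (U g (fst p)) = (1 / complex_of_real (fst g)) *\<^sub>C (U g (snd p) - complex_of_real (snd g) *\<^sub>C U g (fst p))"
    by (rule solve_a[OF a])
  then show ?thesis using op_app_in[OF opB fd'] unfolding Sg_def by simp
qed

lemma Ginv_S_surj:
  assumes inv: "G_invariant G U B" and g: "g \<in> G" and un: "unitary (U g)" and a: "fst g > 0"
    and pB: "p \<in> B"
  shows "\<exists>q\<in>B. p = Sg U g q"
proof -
  have opB: "is_operator B" using inv unfolding G_invariant_def closed_operator_def by simp
  have dom: "U g ` op_dom B = op_dom B"
    and frm: "\<And>f. f \<in> op_dom B \<Longrightarrow> U g (op_app B (inv (U g) f))
         = complex_of_real (fst g) *\<^sub>C op_app B f + complex_of_real (snd g) *\<^sub>C f"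
    using inv g unfolding G_invariant_def by auto
  have fd: "fst p \<in> op_dom B" using pB op_dom_iff by (metis prod.collapse)
  then obtain f1 where f1: "f1 \<in> op_dom B" and ff: "fst p = U g f1" using dom by blast
  have "op_app B (fst p) = snd p" using op_app_eq[OF opB] pB by (metis prod.collapse)
  with frm[OF fd] have "U g (op_app B f1) = complex_of_real (fst g) *\<^sub>C snd p + complex_of_real (snd g) *\<^sub>C fst p"
    using ff by (simp add: unitary_inv[OF un])
  then have "snd p = (1 / complex_of_real (fst g)) *\<^sub>C (U g (op_app B f1) - complex_of_real (snd g) *\<^sub>C fst p)"
    by (rule solve_a[OF a])
  then have "p = Sg U g (f1, op_app B f1)" unfolding Sg_def using ff by (simp add: prod_eq_iff)
  then show ?thesis using op_app_in[OF opB f1] by blast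
qed

lemma U_id:
  assumes G: "affine_subgroup G" and rep: "unitary_rep G U"
  shows "U aff_id x = x"
proof -
  have idG: "aff_id \<in> G" using G unfolding affine_subgroup_def by simp
  have un: "unitary (U aff_id)" using rep idG unfolding unitary_rep_def by simp
  have "aff_comp aff_id aff_id = aff_id" unfolding aff_comp_def aff_id_def by simp
  then have "U aff_id = U aff_id \<circ> U aff_id" using rep idG unfolding unitary_rep_def by metis
  then have "U aff_id (U aff_id x) = U aff_id x" by (metis comp_apply)
  then show ?thesis using unitary_inj[OF un] by (simp add: inj_eq)
qed

lemma U_inv:
  assumes G: "affine_subgroup G" and rep: "unitary_rep G U" and g: "g \<in> G"
  shows "U g (U (aff_inv g) x) = x" "U (aff_inv g) (U g x) = x"
proof -
  have a: "fst g > 0" using G g unfolding affine_subgroup_def by simp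
  have hG: "aff_inv g \<in> G" using G g unfolding affine_subgroup_def by simp
  have c1: "aff_comp g (aff_inv g) = aff_id" using a unfolding aff_comp_def aff_inv_def aff_id_def by simp
  have c2: "aff_comp (aff_inv g) g = aff_id" using a unfolding aff_comp_def aff_inv_def aff_id_def
    by (simp add: field_simps)
  have "U aff_id = U g \<circ> U (aff_inv g)" using rep g hG c1 unfolding unitary_rep_def by metis
  then show "U g (U (aff_inv g) x) = x" using U_id[OF G rep] by (metis comp_apply)
  have "U aff_id = U (aff_inv g) \<circ> U g" using rep g hG c2 unfolding unitary_rep_def by metis
  then show "U (aff_inv g) (U g x) = x" using U_id[OF G rep] by (metis comp_apply)
qed

lemma Ginv_intro:
  assumes G: "affine_subgroup G" and rep: "unitary_rep G U"
    and dense: "densely_defined B" and cl: "closed_operator B"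
    and inv: "\<And>g p. g \<in> G \<Longrightarrow> p \<in> B \<Longrightarrow> Sg U g p \<in> B"
  shows "G_invariant G U B"
proof -
  have opB: "is_operator B" using cl unfolding closed_operator_def by simp
  have img: "U g f \<in> op_dom B" if g: "g \<in> G" and f: "f \<in> op_dom B" for g f
  proof -
    have "Sg U g (f, op_app B f) \<in> B" using inv[OF g op_app_in[OF opB f]] .
    then show ?thesis unfolding Sg_def op_dom_iff by auto
  qed
  have "U g ` op_dom B = op_dom B \<and>
        (\<forall>f\<in>op_dom B. U g (op_app B (inv (U g) f))
            = complex_of_real (fst g) *\<^sub>C op_app B f + complex_of_real (snd g) *\<^sub>C f)" if g: "g \<in> G" for g
  proof (intro conjI ballI)
    have hG: "aff_inv g \<in> G" using G g unfolding affine_subgroup_def by simp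
    have a: "fst g > 0" using G g unfolding affine_subgroup_def by simp
    have un: "unitary (U g)" using rep g unfolding unitary_rep_def by simp
    show "U g ` op_dom B = op_dom B"
    proof
      show "U g ` op_dom B \<subseteq> op_dom B" using img[OF g] by blast
      show "op_dom B \<subseteq> U g ` op_dom B"
      proof
        fix f assume f: "f \<in> op_dom B"
        have "U (aff_inv g) f \<in> op_dom B" using img[OF hG f] .
        moreover have "f = U g (U (aff_inv g) f)" using U_inv[OF G rep g] by simp
        ultimately show "f \<in> U g ` op_dom B" by blast
      qed
    qed
    fix f assume f: "f \<in> op_dom B"
    define f1 where "f1 = U (aff_inv g) f"
    have f1d: "f1 \<in> op_dom B" unfolding f1_def using img[OF hG f] .
    have Uf1: "U g f1 = f" unfolding f1_def using U_inv[OF G rep g] by simp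
    have invf: "inv (U g) f = f1" using Uf1 unitary_inv[OF un, of f1] by simp
    have "Sg U g (f1, op_app B f1) \<in> B" using inv[OF g op_app_in[OF opB f1d]] .
    then have "(f, (1 / complex_of_real (fst g)) *\<^sub>C (U g (op_app B f1) - complex_of_real (snd g) *\<^sub>C f)) \<in> B"
      unfolding Sg_def using Uf1 by simp
    then have "op_app B f = (1 / complex_of_real (fst g)) *\<^sub>C (U g (op_app B f1) - complex_of_real (snd g) *\<^sub>C f)"
      by (rule op_app_eq[OF opB])
    then have "U g (op_app B f1) = complex_of_real (fst g) *\<^sub>C op_app B f + complex_of_real (snd g) *\<^sub>C f"
      by (rule solve_a'[OF a])
    then show "U g (op_app B (inv (U g) f)) = complex_of_real (fst g) *\<^sub>C op_app B f + complex_of_real (snd g) *\<^sub>C f"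
      using invf by simp
  qed
  then show ?thesis unfolding G_invariant_def using dense cl by blast
qed





lemma psc_diff: "psc c (p - q) = psc c p - psc c q"
  by (simp add: psc_def scaleC_diff_right prod_eq_iff)

locale vng = vn A0 vp vm for A0 :: "'h::chilbert_space operator" and vp vm +
  fixes G :: "affine set" and U :: "affine \<Rightarrow> 'h \<Rightarrow> 'h"
  assumes G: "affine_subgroup G" and rep: "unitary_rep G U" and inv0: "G_invariant G U A0"
begin

lemma un: "g \<in> G \<Longrightarrow> unitary (U g)" using rep unfolding unitary_rep_def by simp
lemma apos: "g \<in> G \<Longrightarrow> fst g > 0" using G unfolding affine_subgroup_def by simp

abbreviation "S g \<equiv> Sg U g"

lemma S_A0: "g \<in> G \<Longrightarrow> p \<in> A0 \<Longrightarrow> S g p \<in> A0"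
  using Ginv_S[OF inv0 _ un apos] by blast

lemma S_add: "g \<in> G \<Longrightarrow> S g (p + q) = S g p + S g q"
  unfolding Sg_def using un[of g]
  by (simp add: unitary_add scaleC_add_right scaleC_diff_right algebra_simps)

lemma S_psc: "g \<in> G \<Longrightarrow> S g (psc c p) = psc c (S g p)"
  unfolding Sg_def psc_def using un[of g]
  by (simp add: unitary_scaleC scaleC_diff_right scaleC_scaleC mult.commute)

lemma S_diff: "g \<in> G \<Longrightarrow> S g (p - q) = S g p - S g q"
proof -
  assume g: "g \<in> G"
  have "S g (p - q) = S g (p + psc (-1) q)" by (simp add: psc_minus_one)
  also have "\<dots> = S g p + psc (-1) (S g q)" by (simp only: S_add[OF g] S_psc[OF g])
  also have "\<dots> = S g p - S g q" by (simp add: psc_minus_one)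
  finally show ?thesis .
qed

lemma S_om: "g \<in> G \<Longrightarrow> om (S g p) (S g q) = om p q / complex_of_real (fst g)"
proof -
  assume g: "g \<in> G"
  have a: "fst g > 0" using apos[OF g] .
  have u: "unitary (U g)" using un[OF g] .
  show ?thesis
    unfolding Sg_def om_def using a
    by (simp add: cinner_scaleC_left cinner_scaleC_right cinner_diff_left cinner_diff_right
                  unitary_cinner[OF u] field_simps)
qed

lemma S_adj: "g \<in> G \<Longrightarrow> p \<in> adjoint A0 \<Longrightarrow> S g p \<in> adjoint A0"
proof -
  assume g: "g \<in> G" and padj: "p \<in> adjoint A0"
  show ?thesis unfolding adj_iff'
  proof
    fix q assume qA: "q \<in> A0"
    obtain q1 where q1: "q1 \<in> A0" "q = S g q1" using Ginv_S_surj[OF inv0 g un[OF g] apos[OF g] qA] by blast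
    have "om q (S g p) = om q1 p / complex_of_real (fst g)" using S_om[OF g] q1 by simp
    also have "om q1 p = 0" using om_A_adj[OF q1(1) padj] .
    finally have "om q (S g p) = 0" by simp
    then show "cinner (snd q) (fst (S g p)) = cinner (fst q) (snd (S g p))" unfolding om_def by simp
  qed
qed

lemma S_L:
  assumes g: "g \<in> G" and c1: "S g pp - L c11 c21 \<in> A0" and c2: "S g pm - L c12 c22 \<in> A0"
  shows "S g (L u1 u2) - L (c11*u1 + c12*u2) (c21*u1 + c22*u2) \<in> A0"
proof -
  have "S g (L u1 u2) = psc u1 (S g pp) + psc u2 (S g pm)" unfolding L_def using S_add[OF g] S_psc[OF g] by simp
  moreover have "L (c11*u1 + c12*u2) (c21*u1 + c22*u2) = psc u1 (L c11 c21) + psc u2 (L c12 c22)"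
    by (simp add: L_psc L_add algebra_simps)
  ultimately have "S g (L u1 u2) - L (c11*u1 + c12*u2) (c21*u1 + c22*u2)
      = psc u1 (S g pp - L c11 c21) + psc u2 (S g pm - L c12 c22)"
    by (simp add: psc_diff algebra_simps)
  also have "\<dots> \<in> A0" using op_add[OF op0 op_psc[OF op0 c1] op_psc[OF op0 c2]] .
  finally show ?thesis .
qed

lemma eig:
  assumes g: "g \<in> G" and c1: "S g pp - L c11 c21 \<in> A0" and c2: "S g pm - L c12 c22 \<in> A0"
    and ln: "line B a b" and inv: "\<And>p. p \<in> B \<Longrightarrow> S g p \<in> B"
  shows "\<exists>t. c11*a + c12*b = t*a \<and> c21*a + c22*b = t*b"
proof -
  have "L a b \<in> B" using ln unfolding line_def by simp
  then have "S g (L a b) \<in> B" by (rule inv)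
  then obtain t where "S g (L a b) - psc t (L a b) \<in> A0" using ln unfolding line_def by blast
  then have "S g (L a b) - L (t * a) (t * b) \<in> A0" by (simp add: L_psc)
  then have "t * a = c11*a + c12*b \<and> t * b = c21*a + c22*b"
    using coords_unique S_L[OF g c1 c2] by blast
  then show ?thesis by (intro exI[of _ t]) simp
qed

lemma pres:
  assumes g: "g \<in> G" and c1: "S g pp - L c11 c21 \<in> A0" and c2: "S g pm - L c12 c22 \<in> A0"
  shows "w0 (c11*u1 + c12*u2) (c21*u1 + c22*u2) (c11*x1 + c12*x2) (c21*x1 + c22*x2)
       = complex_of_real (1 / fst g) * w0 u1 u2 x1 x2"
proof -
  have "om (S g (L u1 u2)) (S g (L x1 x2)) = om (L u1 u2) (L x1 x2) / complex_of_real (fst g)"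
    by (rule S_om[OF g])
  moreover have "om (S g (L u1 u2)) (S g (L x1 x2))
      = om (L (c11*u1 + c12*u2) (c21*u1 + c22*u2)) (L (c11*x1 + c12*x2) (c21*x1 + c22*x2))"
    by (rule om_coords[OF S_L[OF g c1 c2] S_L[OF g c1 c2] S_adj[OF g L_adj]])
  ultimately have "(2 * \<i>) * w0 (c11*u1 + c12*u2) (c21*u1 + c22*u2) (c11*x1 + c12*x2) (c21*x1 + c22*x2)
      = (2 * \<i>) * (w0 u1 u2 x1 x2 / complex_of_real (fst g))"
    by (simp only: om_L_w0 times_divide_eq_right mult.assoc)
  then have "w0 (c11*u1 + c12*u2) (c21*u1 + c22*u2) (c11*x1 + c12*x2) (c21*x1 + c22*x2)
      = w0 u1 u2 x1 x2 / complex_of_real (fst g)"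
    by (subst (asm) mult_cancel_left) simp
  then show ?thesis by (simp add: divide_inverse mult.commute)
qed

lemma scalar_all:
  assumes g: "g \<in> G" and c1: "S g pp - L c11 c21 \<in> A0" and c2: "S g pm - L c12 c22 \<in> A0"
    and sc: "c12 = 0 \<and> c21 = 0 \<and> c11 = c22"
  shows "\<forall>x\<in>adjoint A0. S g x - psc c11 x \<in> A0"
proof
  fix x assume xadj: "x \<in> adjoint A0"
  then obtain a b where xab: "x - L a b \<in> A0" using von_neumann by blast
  have SL: "S g (L a b) - L (c11 * a) (c11 * b) \<in> A0"
    using S_L[OF g c1 c2, of a b] sc by (simp add: mult.commute)
  have "S g x - psc c11 x = (S g (x - L a b) - psc c11 (x - L a b)) + (S g (L a b) - L (c11 * a) (c11 * b))"
    by (simp add: S_diff[OF g] psc_diff L_psc algebra_simps)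
  also have "\<dots> \<in> A0"
    using op_add[OF op0 op_diff[OF op0 S_A0[OF g xab] op_psc[OF op0 xab]] SL] .
  finally show "S g x - psc c11 x \<in> A0" .
qed

end





lemma bl_pair1: "bounded_linear (\<lambda>q::'a::chilbert_space \<times> 'a. cinner c (fst q) - cinner d (snd q))"
  by (intro bounded_linear_sub bounded_linear_compose[OF bounded_linear_cinner_right bounded_linear_fst]
            bounded_linear_compose[OF bounded_linear_cinner_right bounded_linear_snd])

lemma bl_pair2: "bounded_linear (\<lambda>q::'a::chilbert_space \<times> 'a. cinner (snd q) c - cinner (fst q) d)"
  by (intro bounded_linear_sub bounded_linear_compose[OF bounded_linear_cinner_left bounded_linear_snd]
            bounded_linear_compose[OF bounded_linear_cinner_left bounded_linear_fst])

lemma closed_zero_set: "bounded_linear f \<Longrightarrow> closed {x. f x = 0}"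
  by (rule closed_Collect_eq) (simp_all add: linear_continuous_on)

lemma adjoint_closed: "closed (adjoint (A :: 'a::chilbert_space operator))"
proof -
  have "adjoint A = (\<Inter>p\<in>A. {q. cinner (snd p) (fst q) - cinner (fst p) (snd q) = 0})"
  proof (rule set_eqI)
    fix q show "q \<in> adjoint A \<longleftrightarrow> q \<in> (\<Inter>p\<in>A. {q. cinner (snd p) (fst q) - cinner (fst p) (snd q) = 0})"
      unfolding adj_iff' by simp
  qed
  also have "closed \<dots>" using closed_zero_set[OF bl_pair1] by blast
  finally show ?thesis .
qed

context vn
begin

lemma line_closed:
  assumes ln: "line B a b" and opB: "is_operator B" and sub: "A0 \<subseteq> B" "B \<subseteq> adjoint A0"
  shows "closed B"
proof -
  define z where "z = L (cnj b / complex_of_real P) (cnj a / complex_of_real Q)"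
  have omz: "om x z = 2 * \<i> * (c * b - d * a)" if "x - L c d \<in> A0" "x \<in> adjoint A0" for x c d
  proof -
    have "om x z = om (L c d) z"
      using om_coords[OF that(1), of z "cnj b / complex_of_real P" "cnj a / complex_of_real Q"] L_adj
      unfolding z_def by (simp add: op_zero[OF op0])
    also have "\<dots> = 2 * \<i> * (c * b - d * a)"
      unfolding z_def om_L_w0 w0_def using P_pos Q_pos by simp
    finally show ?thesis .
  qed
  have "B = adjoint A0 \<inter> {x. om x z = 0}"
  proof
    show "B \<subseteq> adjoint A0 \<inter> {x. om x z = 0}"
    proof
      fix x assume xB: "x \<in> B"
      then have xa: "x \<in> adjoint A0" using sub by blast
      then obtain c d where xcd: "x - L c d \<in> A0" using von_neumann by blast
      have "a * d = b * c" by (rule line_coords[OF ln xB xcd])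
      then have "om x z = 0" using omz[OF xcd xa] by (simp add: algebra_simps)
      then show "x \<in> adjoint A0 \<inter> {x. om x z = 0}" using xa by simp
    qed
    show "adjoint A0 \<inter> {x. om x z = 0} \<subseteq> B"
    proof
      fix x assume "x \<in> adjoint A0 \<inter> {x. om x z = 0}"
      then have xa: "x \<in> adjoint A0" and o: "om x z = 0" by auto
      then obtain c d where xcd: "x - L c d \<in> A0" using von_neumann by blast
      have "c * b - d * a = 0" using o omz[OF xcd xa] by simp
      then have "a * d = b * c" by (simp add: algebra_simps)
      then show "x \<in> B" by (rule line_mem[OF ln opB sub(1) xcd])
    qed
  qed
  also have "closed (adjoint A0 \<inter> {x. om x z = 0})"
  proof (rule closed_Int[OF adjoint_closed])
    have "{x. om x z = 0} = {x. cinner (snd x) (fst z) - cinner (fst x) (snd z) = 0}" unfolding om_def by simp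
    then show "closed {x. om x z = 0}" using closed_zero_set[OF bl_pair2] by simp
  qed
  finally show ?thesis .
qed

lemma line_det:
  assumes l1: "line B a b" and l2: "line B' c d" and ne: "B \<noteq> B'"
    and op1: "is_operator B" and op2: "is_operator B'" and s1: "A0 \<subseteq> B" and s2: "A0 \<subseteq> B'"
  shows "a * d - b * c \<noteq> 0"
proof
  assume "a * d - b * c = 0"
  then have det: "a * d = b * c" by simp
  have "B \<subseteq> B'" by (rule line_sub[OF l1 l2 op2 s2 det])
  moreover have "B' \<subseteq> B" by (rule line_sub[OF l2 l1 op1 s1]) (use det in \<open>simp add: algebra_simps\<close>)
  ultimately show False using ne by blast
qed

lemma def_mu:
  assumes e: "e > 0"
    and bnd: "\<And>p. p \<in> A0 \<Longrightarrow> e * (norm (fst p))\<^sup>2 \<le> \<bar>Re (cinner (snd p - complex_of_real \<mu> *\<^sub>C fst p) (fst p))\<bar>"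
  shows "\<exists>u. u \<noteq> 0 \<and> (u, complex_of_real \<mu> *\<^sub>C u) \<in> adjoint A0"
proof -
  have bnd': "e * norm (fst p) \<le> norm (snd p - complex_of_real \<mu> *\<^sub>C fst p)" if pA: "p \<in> A0" for p
  proof (cases "fst p = 0")
    case True then show ?thesis by simp
  next
    case False
    then have nf: "norm (fst p) > 0" by simp
    have "e * (norm (fst p))\<^sup>2 \<le> \<bar>Re (cinner (snd p - complex_of_real \<mu> *\<^sub>C fst p) (fst p))\<bar>" using bnd[OF pA] .
    also have "\<dots> \<le> cmod (cinner (snd p - complex_of_real \<mu> *\<^sub>C fst p) (fst p))" by (rule abs_Re_le_cmod)
    also have "\<dots> \<le> norm (snd p - complex_of_real \<mu> *\<^sub>C fst p) * norm (fst p)" by (rule cauchy_schwarz)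
    finally have "(e * norm (fst p)) * norm (fst p) \<le> norm (snd p - complex_of_real \<mu> *\<^sub>C fst p) * norm (fst p)"
      by (simp add: power2_eq_square mult.assoc)
    then show ?thesis using nf by simp
  qed
  have cl: "closed ((\<lambda>p. snd p - complex_of_real \<mu> *\<^sub>C fst p) ` A0)"
    by (rule range_closed[OF cl0 e]) (use bnd' in auto)
  define y where "y = (complex_of_real \<mu> - \<i>) *\<^sub>C vp"
  obtain p w where pA: "p \<in> A0" and wadj: "(w, cnj (complex_of_real \<mu>) *\<^sub>C w) \<in> adjoint A0"
    and dec: "y = (snd p - complex_of_real \<mu> *\<^sub>C fst p) + w"
    using range_decomp[OF op0 cl, of y] by blast
  show ?thesis
  proof (cases "w = 0")
    case False
    then show ?thesis using wadj by auto
  next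
    case True
    define u where "u = fst p + vp"
    have sp: "snd p = complex_of_real \<mu> *\<^sub>C fst p + y" using dec True by (simp add: algebra_simps)
    have "p + pp = (u, complex_of_real \<mu> *\<^sub>C u)"
      unfolding u_def pp_def y_def using sp
      by (simp add: prod_eq_iff scaleC_add_right scaleC_diff_left algebra_simps y_def)
    moreover have "p + pp \<in> adjoint A0" using adj_add A0_adj pA pp_adj by blast
    ultimately have uadj: "(u, complex_of_real \<mu> *\<^sub>C u) \<in> adjoint A0" by simp
    have "u \<noteq> 0"
    proof
      assume "u = 0"
      then have fp: "fst p = - vp" unfolding u_def by (simp add: eq_neg_iff_add_eq_0)
      have "snd p = - (\<i> *\<^sub>C vp)"
        using sp fp unfolding y_def by (simp add: scaleC_diff_left scaleC_minus_right)
      then have "cinner (snd p) (fst p) = \<i> * complex_of_real P"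
        using fp unfolding P_def by (simp add: cinner_minus_left cinner_minus_right cinner_scaleC_left cinner_self)
      then have "Im (cinner (snd p) (fst p)) = P" by simp
      then show False using Im0[OF pA] P_pos by simp
    qed
    then show ?thesis using uadj by blast
  qed
qed

end





context vng
begin

lemma key_ineq:
  assumes g: "g \<in> G" and lam: "\<forall>x\<in>adjoint A0. S g x - psc lm x \<in> A0"
    and uadj: "(u, complex_of_real \<mu> *\<^sub>C u) \<in> adjoint A0"
    and ne: "(\<mu> - snd g) / fst g \<noteq> \<mu>"
  shows "\<exists>p\<in>A0. (norm (fst p))\<^sup>2 = (1 + (cmod lm)\<^sup>2) * (norm u)\<^sup>2
              \<and> Re (cinner (snd p) (fst p)) = ((\<mu> - snd g) / fst g + (cmod lm)\<^sup>2 * \<mu>) * (norm u)\<^sup>2"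
proof -
  define a where "a = fst g"
  define b where "b = snd g"
  define m where "m = (\<mu> - b) / a"
  have a: "a > 0" unfolding a_def using apos[OF g] .
  have u: "unitary (U g)" using un[OF g] .
  define p where "p = S g (u, complex_of_real \<mu> *\<^sub>C u) - psc lm (u, complex_of_real \<mu> *\<^sub>C u)"
  have pA: "p \<in> A0" unfolding p_def using lam uadj by blast
  have fp: "fst p = U g u - lm *\<^sub>C u" unfolding p_def Sg_def by simp
  have "snd (S g (u, complex_of_real \<mu> *\<^sub>C u))
      = (1 / complex_of_real a) *\<^sub>C (complex_of_real \<mu> *\<^sub>C U g u - complex_of_real b *\<^sub>C U g u)"
    unfolding Sg_def a_def b_def by (simp add: unitary_scaleC[OF u])
  also have "\<dots> = complex_of_real m *\<^sub>C U g u"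
    unfolding m_def by (simp add: scaleC_scaleC flip: scaleC_diff_left)
  finally have sp: "snd p = complex_of_real m *\<^sub>C U g u - (lm * complex_of_real \<mu>) *\<^sub>C u"
    unfolding p_def by (simp add: scaleC_scaleC)
  define c0 where "c0 = cinner (U g u) u"
  define N where "N = cinner u u"
  have UU: "cinner (U g u) (U g u) = N" unfolding N_def by (rule unitary_cinner[OF u])
  have "cinner (snd p) u = cinner (fst p) (complex_of_real \<mu> *\<^sub>C u)"
    using uadj pA unfolding adj_iff by blast
  then have "complex_of_real m * c0 - lm * complex_of_real \<mu> * N = complex_of_real \<mu> * (c0 - lm * N)"
    unfolding sp fp c0_def N_def
    by (simp add: cinner_diff_left cinner_diff_right cinner_scaleC_left cinner_scaleC_right)
  then have "(complex_of_real m - complex_of_real \<mu>) * c0 = 0" by (simp add: algebra_simps)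
  moreover have mne: "m \<noteq> \<mu>" unfolding m_def a_def b_def using ne .
  then have "complex_of_real m - complex_of_real \<mu> \<noteq> 0" by simp
  ultimately have c00: "c0 = 0" by simp
  have c0': "cinner u (U g u) = 0" using c00 unfolding c0_def by (metis cinner_commute complex_cnj_zero)
  have nl: "lm * cnj lm = complex_of_real ((cmod lm)\<^sup>2)" by (rule complex_norm_square[symmetric])
  have NN: "N = complex_of_real ((norm u)\<^sup>2)" unfolding N_def by (rule cinner_self)
  have ff: "cinner (fst p) (fst p) = N + lm * cnj lm * N"
    unfolding fp using c00 c0' UU unfolding c0_def N_def
    by (simp add: cinner_diff_left cinner_diff_right cinner_scaleC_left cinner_scaleC_right)
  have sf: "cinner (snd p) (fst p) = complex_of_real m * N + lm * cnj lm * complex_of_real \<mu> * N"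
    unfolding fp sp using c00 c0' UU unfolding c0_def N_def
    by (simp add: cinner_diff_left cinner_diff_right cinner_scaleC_left cinner_scaleC_right algebra_simps)
  have "(norm (fst p))\<^sup>2 = Re (cinner (fst p) (fst p))" by (rule norm_sq_cinner)
  also have "\<dots> = (1 + (cmod lm)\<^sup>2) * (norm u)\<^sup>2" unfolding ff nl NN by (simp add: algebra_simps)
  finally have e1: "(norm (fst p))\<^sup>2 = (1 + (cmod lm)\<^sup>2) * (norm u)\<^sup>2" .
  have e2: "Re (cinner (snd p) (fst p)) = (m + (cmod lm)\<^sup>2 * \<mu>) * (norm u)\<^sup>2"
    unfolding sf nl NN by (simp add: algebra_simps)
  show ?thesis using pA e1 e2 unfolding m_def a_def b_def by blast
qed


abbreviation "HYP \<equiv> (\<exists>A1 A2 A3. A1 \<noteq> A2 \<and> A1 \<noteq> A3 \<and> A2 \<noteq> A3 \<and>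
               (\<forall>B\<in>{A1, A2, A3}. A0 \<subseteq> B \<and> B \<subseteq> adjoint A0 \<and> self_adjoint B \<and> G_invariant G U B))
            \<or> (\<exists>A1 A2. A1 \<noteq> A2 \<and>
               (\<forall>B\<in>{A1, A2}. A0 \<subseteq> B \<and> B \<subseteq> adjoint A0 \<and> maximal_dissipative B \<and> G_invariant G U B)
               \<and> \<not> self_adjoint A2)"

lemma not_max0:
  assumes hyp: HYP shows "\<not> maximal_dissipative A0"
proof
  assume m: "maximal_dissipative A0"
  from hyp show False
  proof (elim disjE exE conjE)
    fix A1 A2 A3 assume ne: "A1 \<noteq> A2" and all: "\<forall>B\<in>{A1, A2, A3}. A0 \<subseteq> B \<and> B \<subseteq> adjoint A0 \<and> self_adjoint B \<and> G_invariant G U B"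
    have mm: "\<And>B. dissipative B \<Longrightarrow> A0 \<subseteq> B \<Longrightarrow> B = A0" using m unfolding maximal_dissipative_def by blast
    have p1: "A0 \<subseteq> A1" "self_adjoint A1" using all by simp_all
    have h1: "A1 = A0" using mm[OF selfadj_dissipative[OF p1(2)] p1(1)] .
    have h2: "A1 = adjoint A1" using p1(2) unfolding self_adjoint_def by simp
    have "A0 = adjoint A0" using h2 unfolding h1 .
    with A0_not_selfadj show False by contradiction
  next
    fix A1 A2 assume ne: "A1 \<noteq> A2" and all: "\<forall>B\<in>{A1, A2}. A0 \<subseteq> B \<and> B \<subseteq> adjoint A0 \<and> maximal_dissipative B \<and> G_invariant G U B"
    have mm: "\<And>B. dissipative B \<Longrightarrow> A0 \<subseteq> B \<Longrightarrow> B = A0" using m unfolding maximal_dissipative_def by blast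
    have p1: "A0 \<subseteq> A1" "maximal_dissipative A1" "A0 \<subseteq> A2" "maximal_dissipative A2" using all by simp_all
    have "A1 = A0" using mm p1(1,2) unfolding maximal_dissipative_def by simp
    moreover have "A2 = A0" using mm p1(3,4) unfolding maximal_dissipative_def by simp
    ultimately show False using ne by simp
  qed
qed

lemma scalar:
  assumes hyp: HYP and g: "g \<in> G"
  shows "\<exists>lm. \<forall>x\<in>adjoint A0. S g x - psc lm x \<in> A0"
proof -
  obtain c11 c21 where c1: "S g pp - L c11 c21 \<in> A0" using von_neumann[OF S_adj[OF g pp_adj]] by blast
  obtain c12 c22 where c2: "S g pm - L c12 c22 \<in> A0" using von_neumann[OF S_adj[OF g pm_adj]] by blast
  have invB: "\<And>p. p \<in> B \<Longrightarrow> S g p \<in> B" if "G_invariant G U B" for B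
    using Ginv_S[OF that g un[OF g] apos[OF g]] .
  have opB: "is_operator B" if "dissipative B" for B using that unfolding dissipative_def by simp
  have "c12 = 0 \<and> c21 = 0 \<and> c11 = c22"
    using hyp
  proof (elim disjE exE conjE)
    fix A1 A2 A3 assume n12: "A1 \<noteq> A2" and n13: "A1 \<noteq> A3" and n23: "A2 \<noteq> A3"
      and all: "\<forall>B\<in>{A1, A2, A3}. A0 \<subseteq> B \<and> B \<subseteq> adjoint A0 \<and> self_adjoint B \<and> G_invariant G U B"
    have ln: "\<exists>a b. line B a b" if "B \<in> {A1, A2, A3}" for B
    proof -
      have h: "A0 \<subseteq> B" "B \<subseteq> adjoint A0" "self_adjoint B" using all that by auto
      have "B \<noteq> A0" using h(3) A0_not_selfadj unfolding self_adjoint_def by auto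
      then show ?thesis using ext_line[OF selfadj_dissipative[OF h(3)] h(1,2)] by blast
    qed
    obtain a1 b1 where l1: "line A1 a1 b1" using ln by blast
    obtain a2 b2 where l2: "line A2 a2 b2" using ln by blast
    obtain a3 b3 where l3: "line A3 a3 b3" using ln by blast
    have d: "is_operator B" "A0 \<subseteq> B" "G_invariant G U B" if "B \<in> {A1, A2, A3}" for B
    proof -
      have h: "A0 \<subseteq> B" "self_adjoint B" "G_invariant G U B" using all that by auto
      show "is_operator B" using h(2) unfolding self_adjoint_def by simp
      show "A0 \<subseteq> B" "G_invariant G U B" using h by auto
    qed
    obtain t1 where e1: "c11*a1 + c12*b1 = t1*a1 \<and> c21*a1 + c22*b1 = t1*b1"
      using eig[OF g c1 c2 l1 invB[OF d(3)]] by auto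
    obtain t2 where e2: "c11*a2 + c12*b2 = t2*a2 \<and> c21*a2 + c22*b2 = t2*b2"
      using eig[OF g c1 c2 l2 invB[OF d(3)]] by auto
    obtain t3 where e3: "c11*a3 + c12*b3 = t3*a3 \<and> c21*a3 + c22*b3 = t3*b3"
      using eig[OF g c1 c2 l3 invB[OF d(3)]] by auto
    have d12: "a1*b2 - b1*a2 \<noteq> 0" using line_det[OF l1 l2 n12 d(1) d(1) d(2) d(2)] by simp
    have d13: "a1*b3 - b1*a3 \<noteq> 0" using line_det[OF l1 l3 n13 d(1) d(1) d(2) d(2)] by simp
    have d23: "a2*b3 - b2*a3 \<noteq> 0" using line_det[OF l2 l3 n23 d(1) d(1) d(2) d(2)] by simp
    show ?thesis using three_eig[of c11 a1 c12 b1 t1 c21 c22 a2 b2 t2 a3 b3 t3] e1 e2 e3 d12 d13 d23 by blast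
  next
    fix A1 A2 assume n12: "A1 \<noteq> A2" and nsa: "\<not> self_adjoint A2"
      and all: "\<forall>B\<in>{A1, A2}. A0 \<subseteq> B \<and> B \<subseteq> adjoint A0 \<and> maximal_dissipative B \<and> G_invariant G U B"
    have nm: "\<not> maximal_dissipative A0" by (rule not_max0[OF hyp])
    have d: "is_operator B" "A0 \<subseteq> B" "G_invariant G U B" "dissipative B" "B \<subseteq> adjoint A0" "B \<noteq> A0"
      if "B \<in> {A1, A2}" for B
    proof -
      have h: "A0 \<subseteq> B" "B \<subseteq> adjoint A0" "maximal_dissipative B" "G_invariant G U B" using all that by auto
      have dB: "dissipative B" using h(3) unfolding maximal_dissipative_def by simp
      show "is_operator B" "A0 \<subseteq> B" "G_invariant G U B" "dissipative B" "B \<subseteq> adjoint A0"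
        using h dB opB by auto
      show "B \<noteq> A0" using h(3) nm by auto
    qed
    obtain a1 b1 where l1: "line A1 a1 b1" using ext_line[OF d(4) d(2) d(5) d(6)] by blast
    obtain a2 b2 where l2: "line A2 a2 b2" using ext_line[OF d(4) d(2) d(5) d(6)] by blast
    obtain t1 where e1: "c11*a1 + c12*b1 = t1*a1 \<and> c21*a1 + c22*b1 = t1*b1"
      using eig[OF g c1 c2 l1 invB[OF d(3)]] by auto
    obtain t2 where e2: "c11*a2 + c12*b2 = t2*a2 \<and> c21*a2 + c22*b2 = t2*b2"
      using eig[OF g c1 c2 l2 invB[OF d(3)]] by auto
    have d12: "a1*b2 - b1*a2 \<noteq> 0" using line_det[OF l1 l2 n12 d(1) d(1) d(2) d(2)] by simp
    have X: "(cmod a1)\<^sup>2 * P - (cmod b1)\<^sup>2 * Q \<ge> 0" using line_dissip[OF l1 d(4)] by simp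
    have Y0: "(cmod a2)\<^sup>2 * P - (cmod b2)\<^sup>2 * Q \<ge> 0" using line_dissip[OF l2 d(4)] by simp
    have "(cmod a2)\<^sup>2 * P \<noteq> (cmod b2)\<^sup>2 * Q"
    proof
      assume "(cmod a2)\<^sup>2 * P = (cmod b2)\<^sup>2 * Q"
      then have "self_adjoint A2" using line_selfadj[OF l2 d(1) d(2) d(5)] by simp
      with nsa show False by simp
    qed
    then have Y: "(cmod a2)\<^sup>2 * P - (cmod b2)\<^sup>2 * Q > 0" using Y0 by simp
    have pr: "(c11*u1 + c12*u2) * cnj (c11*x1 + c12*x2) * complex_of_real P - (c21*u1 + c22*u2) * cnj (c21*x1 + c22*x2) * complex_of_real Q
                 = complex_of_real (1 / fst g) * (u1 * cnj x1 * complex_of_real P - u2 * cnj x2 * complex_of_real Q)" for u1 u2 x1 x2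
      using pres[OF g c1 c2, of u1 u2 x1 x2] unfolding w0_def .
    have s: "1 / fst g > 0" using apos[OF g] by simp
    show ?thesis
      by (rule two_eig_form[OF P_pos Q_pos s pr _ _ _ _ d12 X Y]) (use e1 e2 in auto)
  qed
  then show ?thesis using scalar_all[OF g c1 c2] by blast
qed

lemma part1:
  assumes hyp: HYP
  shows "\<forall>A. A0 \<subseteq> A \<and> A \<subseteq> adjoint A0 \<and> maximal_dissipative A \<longrightarrow> G_invariant G U A"
proof (intro allI impI, elim conjE)
  fix A assume sub: "A0 \<subseteq> A" "A \<subseteq> adjoint A0" and m: "maximal_dissipative A"
  have dA: "dissipative A" using m unfolding maximal_dissipative_def by simp
  have opA: "is_operator A" using dA unfolding dissipative_def by simp
  have "A \<noteq> A0" using not_max0[OF hyp] m by auto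
  then obtain a b where ln: "line A a b" using ext_line[OF dA sub] by blast
  have dense: "densely_defined A"
  proof -
    have "op_dom A0 \<subseteq> op_dom A" using sub unfolding op_dom_def by auto
    then have "closure (op_dom A0) \<subseteq> closure (op_dom A)" by (rule closure_mono)
    moreover have "closure (op_dom A0) = UNIV" using sym0 unfolding symmetric_operator_def densely_defined_def by simp
    ultimately show ?thesis unfolding densely_defined_def by blast
  qed
  have cl: "closed_operator A" unfolding closed_operator_def using opA line_closed[OF ln opA sub] by simp
  show "G_invariant G U A"
  proof (rule Ginv_intro[OF G rep dense cl])
    fix g p assume g: "g \<in> G" and pA: "p \<in> A"
    obtain lm where lm: "\<forall>x\<in>adjoint A0. S g x - psc lm x \<in> A0" using scalar[OF hyp g] by blast
    have "p \<in> adjoint A0" using pA sub by blast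
    then have "S g p - psc lm p \<in> A" using lm sub by blast
    then have "(S g p - psc lm p) + psc lm p \<in> A" using op_add[OF opA _ op_psc[OF opA pA]] by blast
    then show "S g p \<in> A" by simp
  qed
qed

end





context vng
begin

lemma part2:
  assumes sc: "\<forall>g\<in>G. \<exists>lm. \<forall>x\<in>adjoint A0. S g x - psc lm x \<in> A0" and ne: "G \<noteq> {aff_id}"
  shows "\<not> semibounded A0"
proof
  assume sb: "semibounded A0"
  have idG: "aff_id \<in> G" using G unfolding affine_subgroup_def by simp
  obtain g where g: "g \<in> G" and gne: "g \<noteq> aff_id" using ne idG by blast
  define a where "a = fst g"
  define b where "b = snd g"
  have a: "a > 0" unfolding a_def using apos[OF g] .
  have nid: "\<not> (a = 1 \<and> b = 0)" using gne unfolding a_def b_def aff_id_def by (auto simp: prod_eq_iff)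
  obtain lm where lm: "\<forall>x\<in>adjoint A0. S g x - psc lm x \<in> A0" using sc g by blast
  define s where "s = (cmod lm)\<^sup>2"
  have s0: "s \<ge> 0" unfolding s_def by simp
  have notboth: "False" if "(\<mu> - b) / a = \<mu>" "(\<nu> - b) / a = \<nu>" "\<mu> \<noteq> \<nu>" for \<mu> \<nu>
  proof -
    have "\<mu> - b = a * \<mu>" "\<nu> - b = a * \<nu>" using that a by (simp_all add: divide_eq_eq mult.commute)
    then have "(\<mu> - \<nu>) = a * (\<mu> - \<nu>)" by (simp add: algebra_simps)
    then have "a = 1" using that(3) by simp
    then have "b = 0" using \<open>\<mu> - b = a * \<mu>\<close> by simp
    with \<open>a = 1\<close> nid show False by simp
  qed
  have Re_shift: "Re (cinner (snd p - complex_of_real \<mu> *\<^sub>C fst p) (fst p))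
      = Re (cinner (snd p) (fst p)) - \<mu> * (norm (fst p))\<^sup>2" for p \<mu>
    by (simp add: cinner_diff_left cinner_scaleC_left cinner_self)
  from sb obtain c where cases: "(\<forall>f\<in>op_dom A0. c * (norm f)\<^sup>2 \<le> Re (cinner (op_app A0 f) f))
    \<or> (\<forall>f\<in>op_dom A0. Re (cinner (op_app A0 f) f) \<le> c * (norm f)\<^sup>2)"
    unfolding semibounded_def by blast
  have pair: "fst p \<in> op_dom A0 \<and> op_app A0 (fst p) = snd p" if "p \<in> A0" for p
  proof
    show "fst p \<in> op_dom A0" unfolding op_dom_iff using that by (intro exI[of _ "snd p"]) simp
    show "op_app A0 (fst p) = snd p" using op_app_eq[OF op0, of "fst p" "snd p"] that by simp
  qed
  from cases show False
  proof
    assume low: "\<forall>f\<in>op_dom A0. c * (norm f)\<^sup>2 \<le> Re (cinner (op_app A0 f) f)"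
    have lowp: "c * (norm (fst p))\<^sup>2 \<le> Re (cinner (snd p) (fst p))" if "p \<in> A0" for p
      using low pair[OF that] by metis
    define m0 where "m0 = min c (min 0 (a * (c * (1 + s)) + b)) - 1"
    obtain \<mu> where mu: "\<mu> \<le> m0" and good: "(\<mu> - b) / a \<noteq> \<mu>"
    proof (cases "(m0 - b) / a = m0")
      case True
      then have "(m0 - 1 - b) / a \<noteq> m0 - 1" using notboth[of m0 "m0 - 1"] by auto
      then show ?thesis using that[of "m0 - 1"] by simp
    next
      case False
      then show ?thesis using that[of m0] by simp
    qed
    have mu1: "\<mu> < c" "\<mu> < 0" "\<mu> < a * (c * (1 + s)) + b" using mu unfolding m0_def by auto
    have e: "c - \<mu> > 0" using mu1 by simp
    have "\<exists>u. u \<noteq> 0 \<and> (u, complex_of_real \<mu> *\<^sub>C u) \<in> adjoint A0"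
    proof (rule def_mu[OF e])
      fix p assume pA: "p \<in> A0"
      have "(c - \<mu>) * (norm (fst p))\<^sup>2 \<le> Re (cinner (snd p) (fst p)) - \<mu> * (norm (fst p))\<^sup>2"
        using lowp[OF pA] by (simp add: algebra_simps)
      then show "(c - \<mu>) * (norm (fst p))\<^sup>2 \<le> \<bar>Re (cinner (snd p - complex_of_real \<mu> *\<^sub>C fst p) (fst p))\<bar>"
        unfolding Re_shift by linarith
    qed
    then obtain u where u0: "u \<noteq> 0" and uadj: "(u, complex_of_real \<mu> *\<^sub>C u) \<in> adjoint A0" by blast
    obtain p where pA: "p \<in> A0" and n1: "(norm (fst p))\<^sup>2 = (1 + s) * (norm u)\<^sup>2"
      and n2: "Re (cinner (snd p) (fst p)) = ((\<mu> - b) / a + s * \<mu>) * (norm u)\<^sup>2"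
      using key_ineq[OF g lm uadj good[unfolded a_def b_def]] unfolding s_def a_def b_def by blast
    have N: "(norm u)\<^sup>2 > 0" using u0 by simp
    have "(c * (1 + s)) * (norm u)\<^sup>2 \<le> ((\<mu> - b) / a + s * \<mu>) * (norm u)\<^sup>2"
      using lowp[OF pA] n1 n2 by (simp add: mult.assoc)
    then have ineq: "c * (1 + s) \<le> (\<mu> - b) / a + s * \<mu>" using mult_le_cancel_right_pos[OF N] by blast
    have "(\<mu> - b) / a < c * (1 + s)" using mu1(3) a by (simp add: pos_divide_less_eq mult.commute)
    moreover have "s * \<mu> \<le> 0" using s0 mu1(2) by (simp add: mult_nonneg_nonpos)
    ultimately show False using ineq by linarith
  next
    assume up: "\<forall>f\<in>op_dom A0. Re (cinner (op_app A0 f) f) \<le> c * (norm f)\<^sup>2"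
    have upp: "Re (cinner (snd p) (fst p)) \<le> c * (norm (fst p))\<^sup>2" if "p \<in> A0" for p
      using up pair[OF that] by metis
    define m0 where "m0 = max c (max 0 (a * (c * (1 + s)) + b)) + 1"
    obtain \<mu> where mu: "\<mu> \<ge> m0" and good: "(\<mu> - b) / a \<noteq> \<mu>"
    proof (cases "(m0 - b) / a = m0")
      case True
      then have "(m0 + 1 - b) / a \<noteq> m0 + 1" using notboth[of m0 "m0 + 1"] by auto
      then show ?thesis using that[of "m0 + 1"] by simp
    next
      case False
      then show ?thesis using that[of m0] by simp
    qed
    have mu1: "\<mu> > c" "\<mu> > 0" "\<mu> > a * (c * (1 + s)) + b" using mu unfolding m0_def by auto
    have e: "\<mu> - c > 0" using mu1 by simp
    have "\<exists>u. u \<noteq> 0 \<and> (u, complex_of_real \<mu> *\<^sub>C u) \<in> adjoint A0"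
    proof (rule def_mu[OF e])
      fix p assume pA: "p \<in> A0"
      have "Re (cinner (snd p) (fst p)) - \<mu> * (norm (fst p))\<^sup>2 \<le> - ((\<mu> - c) * (norm (fst p))\<^sup>2)"
        using upp[OF pA] by (simp add: algebra_simps)
      then show "(\<mu> - c) * (norm (fst p))\<^sup>2 \<le> \<bar>Re (cinner (snd p - complex_of_real \<mu> *\<^sub>C fst p) (fst p))\<bar>"
        unfolding Re_shift by linarith
    qed
    then obtain u where u0: "u \<noteq> 0" and uadj: "(u, complex_of_real \<mu> *\<^sub>C u) \<in> adjoint A0" by blast
    obtain p where pA: "p \<in> A0" and n1: "(norm (fst p))\<^sup>2 = (1 + s) * (norm u)\<^sup>2"
      and n2: "Re (cinner (snd p) (fst p)) = ((\<mu> - b) / a + s * \<mu>) * (norm u)\<^sup>2"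
      using key_ineq[OF g lm uadj good[unfolded a_def b_def]] unfolding s_def a_def b_def by blast
    have N: "(norm u)\<^sup>2 > 0" using u0 by simp
    have "((\<mu> - b) / a + s * \<mu>) * (norm u)\<^sup>2 \<le> (c * (1 + s)) * (norm u)\<^sup>2"
      using upp[OF pA] n1 n2 by (simp add: mult.assoc)
    then have ineq: "(\<mu> - b) / a + s * \<mu> \<le> c * (1 + s)" using mult_le_cancel_right_pos[OF N] by blast
    have "c * (1 + s) < (\<mu> - b) / a" using mu1(3) a by (simp add: pos_less_divide_eq mult.commute)
    moreover have "s * \<mu> \<ge> 0" using s0 mu1(2) by simp
    ultimately show False using ineq by linarith
  qed
qed

end

theorem theorem6p3:
  fixes G :: "affine set"
    and U :: "affine \<Rightarrow> 'h::chilbert_space \<Rightarrow> 'h"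
    and A0 :: "'h operator"
  assumes sep: "separable_space TYPE('h)"
    and G: "affine_subgroup G"
    and rep: "unitary_rep G U"
    and inv0: "G_invariant G U A0"
    and closed0: "closed_operator A0"
    and sym0: "symmetric_operator A0"
    and def0: "deficiency_indices_1_1 A0"
    and hyp: "(\<exists>A1 A2 A3. A1 \<noteq> A2 \<and> A1 \<noteq> A3 \<and> A2 \<noteq> A3 \<and>
               (\<forall>B\<in>{A1, A2, A3}. A0 \<subseteq> B \<and> B \<subseteq> adjoint A0 \<and> self_adjoint B \<and> G_invariant G U B))
            \<or> (\<exists>A1 A2. A1 \<noteq> A2 \<and>
               (\<forall>B\<in>{A1, A2}. A0 \<subseteq> B \<and> B \<subseteq> adjoint A0 \<and> maximal_dissipative B \<and> G_invariant G U B)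
               \<and> \<not> self_adjoint A2)"
  shows "(\<forall>A. A0 \<subseteq> A \<and> A \<subseteq> adjoint A0 \<and> maximal_dissipative A \<longrightarrow> G_invariant G U A)
       \<and> (G \<noteq> {aff_id} \<longrightarrow> \<not> semibounded A0)"
proof -
  obtain vp where vp: "vp \<noteq> 0" "deficiency_space A0 \<i> = {c *\<^sub>C vp | c. True}"
    using def0 unfolding deficiency_indices_1_1_def cdim_one_def by blast
  obtain vm where vm: "vm \<noteq> 0" "deficiency_space A0 (- \<i>) = {c *\<^sub>C vm | c. True}"
    using def0 unfolding deficiency_indices_1_1_def cdim_one_def by blast
  interpret vng A0 vp vm G U
    by unfold_locales (use closed0 sym0 vp vm G rep inv0 in auto)
  have sc: "\<forall>g\<in>G. \<exists>lm. \<forall>x\<in>adjoint A0. Sg U g x - psc lm x \<in> A0"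
    using scalar[OF hyp] by blast
  show ?thesis using part1[OF hyp] part2[OF sc] by blast
qed


end
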